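(* Let $A\in {\operatorname{\mathsf{TPD}}}_n(\mathbb{S}_{\max}^\vee)$, set $\gamma_i=a_{ii}$ ordered so that $\gamma_1\succeq\cdots\succeq\gamma_n$, let $\gamma=\gamma_k$ and $B=B_k=\gamma_k I\ominus A$. Assume there exists a column $j$ of $B^\mathrm{adj}$ which is in $(\mathbb{S}_{\max}^\vee)^n\setminus \{\mathbf{0}\}$. Then, $j=k$, and any $\mathbb{S}_{\max}$-eigenvector is a multiple of $B^\mathrm{adj}_{:,j}$ and $\gamma$ is a simple (algebraic) $\mathbb{S}_{\max}$-eigenvalue of $A$.
   Context: $\mathbb{S}_{\max}$ is the symmetrized tropical semiring over a divisible totally ordered abelian group, with zero $\mathbf{0}$, unit $\mathbf{1}$, minus $\ominus$; $\mathbb{S}_{\max}^\vee$ is the set of signed elements; $a\,\nabla\, b$ iff $a\ominus b$ is balanced; $a\preceq b$ iff $b=a\oplus b$. $A\in{\operatorname{\mathsf{TPD}}}_n(\mathbb{S}_{\max}^\vee)$: $A$ symmetric with signed entries, $\mathbf{0}<a_{ii}$ and $a_{ij}^2<a_{ii}a_{jj}$ for $i\ne j$ (where $a<b$ iff $b\ominus a$ is positive). Its $\mathbb{S}_{\max}$-eigenvalues are its diagonal entries (simple if occurring once). $(M^{\mathrm{adj}})_{ij}=(\ominus\mathbf{1})^{i+j}\det M[\hat j,\hat i]$ (signed determinant), $M_{:,j}$ the $j$-th column. An $\mathbb{S}_{\max}$-eigenvector associated to $\gamma$ is $v\in(\mathbb{S}_{\max}^\vee)^n\setminus\{\mathbf{0}\}$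 with $Av\,\nabla\,\gamma v$. *)

theory Defs
  imports Main "HOL-Combinatorics.Permutations"
begin

text \<open>The symmetrized tropical semiring S_max over a totally ordered abelian group 'a
  (written additively: the tropical product is the group operation +, the tropical sum is max).\<close>

datatype 'a smax = SZero | SPos 'a | SNeg 'a | SBal 'a

fun smod :: "'a smax \<Rightarrow> 'a" where
  "smod (SPos a) = a" | "smod (SNeg a) = a" | "smod (SBal a) = a" | "smod SZero = undefined"

instantiation smax :: (linordered_ab_group_add) comm_monoid_add
begin
definition zero_smax :: "'a smax" where "zero_smax = SZero"
fun plus_smax :: "'a smax \<Rightarrow> 'a smax \<Rightarrow> 'a smax" where
  "plus_smax SZero y = y"
| "plus_smax x SZero = x"
| "plus_smax x y = (if smod y < smod x then x else if smod x < smod y then y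
                    else if x = y then x else SBal (smod x))"
instance
proof
  fix a b c :: "'a smax"
  show "a + b + c = a + (b + c)"
    by (cases a; cases b; cases c) (auto simp: not_less)
  show "a + b = b + a"
    by (cases a; cases b) auto
  show "0 + a = a" by (simp add: zero_smax_def)
qed
end

instantiation smax :: (linordered_ab_group_add) comm_monoid_mult
begin
definition one_smax :: "'a smax" where "one_smax = SPos 0"
fun times_smax :: "'a smax \<Rightarrow> 'a smax \<Rightarrow> 'a smax" where
  "times_smax SZero y = SZero"
| "times_smax x SZero = SZero"
| "times_smax (SPos a) (SPos b) = SPos (a + b)"
| "times_smax (SPos a) (SNeg b) = SNeg (a + b)"
| "times_smax (SNeg a) (SPos b) = SNeg (a + b)"
| "times_smax (SNeg a) (SNeg b) = SPos (a + b)"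
| "times_smax x y = SBal (smod x + smod y)"
instance
proof
  fix a b c :: "'a smax"
  show "a * b * c = a * (b * c)"
    by (cases a; cases b; cases c) (auto simp: add.assoc)
  show "a * b = b * a"
    by (cases a; cases b) (auto simp: add.commute)
  show "1 * a = a" by (cases a) (simp_all add: one_smax_def)
qed
end

fun sminus :: "'a smax \<Rightarrow> 'a smax" where
  "sminus SZero = SZero" | "sminus (SPos a) = SNeg a" | "sminus (SNeg a) = SPos a"
| "sminus (SBal a) = SBal a"

definition ssub :: "'a::linordered_ab_group_add smax \<Rightarrow> 'a smax \<Rightarrow> 'a smax" where
  "ssub a b = a + sminus b"

definition signed :: "'a smax \<Rightarrow> bool" where
  "signed x \<longleftrightarrow> (\<forall>a. x \<noteq> SBal a)"

definition balanced :: "'a smax \<Rightarrow> bool" where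
  "balanced x \<longleftrightarrow> x = SZero \<or> (\<exists>a. x = SBal a)"

definition spositive :: "'a smax \<Rightarrow> bool" where
  "spositive x \<longleftrightarrow> (\<exists>a. x = SPos a)"

definition sbal :: "'a::linordered_ab_group_add smax \<Rightarrow> 'a smax \<Rightarrow> bool" where
  "sbal a b \<longleftrightarrow> balanced (ssub a b)"

definition sle :: "'a::linordered_ab_group_add smax \<Rightarrow> 'a smax \<Rightarrow> bool" where
  "sle a b \<longleftrightarrow> b = a + b"

definition sless :: "'a::linordered_ab_group_add smax \<Rightarrow> 'a smax \<Rightarrow> bool" where
  "sless a b \<longleftrightarrow> spositive (ssub b a)"

text \<open>n x n matrices are functions nat => nat => 'a smax, indices 0..n-1.\<close>

definition ssign :: "(nat \<Rightarrow> nat) \<Rightarrow> 'a::linordered_ab_group_add smax" where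
  "ssign p = (if evenperm p then 1 else sminus 1)"

definition sdet :: "nat \<Rightarrow> (nat \<Rightarrow> nat \<Rightarrow> 'a::linordered_ab_group_add smax) \<Rightarrow> 'a smax" where
  "sdet n M = (\<Sum>p\<in>{p. p permutes {..<n}}. ssign p * (\<Prod>i<n. M i (p i)))"

definition skip :: "nat \<Rightarrow> nat \<Rightarrow> nat" where
  "skip r i = (if i < r then i else Suc i)"

definition sminor :: "(nat \<Rightarrow> nat \<Rightarrow> 'a) \<Rightarrow> nat \<Rightarrow> nat \<Rightarrow> (nat \<Rightarrow> nat \<Rightarrow> 'a)" where
  "sminor M r c = (\<lambda>i j. M (skip r i) (skip c j))"

definition sadj :: "nat \<Rightarrow> (nat \<Rightarrow> nat \<Rightarrow> 'a::linordered_ab_group_add smax) \<Rightarrow> (nat \<Rightarrow> nat \<Rightarrow> 'a smax)" where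
  "sadj n M = (\<lambda>i j. (sminus 1) ^ (i + j) * sdet (n - 1) (sminor M j i))"

definition smat_vec :: "nat \<Rightarrow> (nat \<Rightarrow> nat \<Rightarrow> 'a::linordered_ab_group_add smax) \<Rightarrow> (nat \<Rightarrow> 'a smax) \<Rightarrow> (nat \<Rightarrow> 'a smax)" where
  "smat_vec n M v = (\<lambda>i. \<Sum>j<n. M i j * v j)"

definition TPD :: "nat \<Rightarrow> (nat \<Rightarrow> nat \<Rightarrow> 'a::linordered_ab_group_add smax) \<Rightarrow> bool" where
  "TPD n A \<longleftrightarrow>
     (\<forall>i<n. \<forall>j<n. A i j = A j i) \<and>
     (\<forall>i<n. \<forall>j<n. signed (A i j)) \<and>
     (\<forall>i<n. sless 0 (A i i)) \<and>
     (\<forall>i<n. \<forall>j<n. i \<noteq> j \<longrightarrow> sless (A i j * A i j) (A i i * A j j))"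

definition seigvec :: "nat \<Rightarrow> (nat \<Rightarrow> nat \<Rightarrow> 'a::linordered_ab_group_add smax) \<Rightarrow> 'a smax \<Rightarrow> (nat \<Rightarrow> 'a smax) \<Rightarrow> bool" where
  "seigvec n A \<gamma> v \<longleftrightarrow>
     (\<forall>i<n. signed (v i)) \<and> (\<exists>i<n. v i \<noteq> 0) \<and>
     (\<forall>i<n. sbal (smat_vec n A v i) (\<gamma> * v i))"

definition scharpoly :: "nat \<Rightarrow> (nat \<Rightarrow> nat \<Rightarrow> 'a::linordered_ab_group_add smax) \<Rightarrow> 'a smax \<Rightarrow> 'a smax" where
  "scharpoly n A x = sdet n (\<lambda>i j. ssub (if i = j then x else 0) (A i j))"

definition simple_alg_eigenvalue :: "nat \<Rightarrow> (nat \<Rightarrow> nat \<Rightarrow> 'a::linordered_ab_group_add smax) \<Rightarrow> 'a smax \<Rightarrow> bool" where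
  "simple_alg_eigenvalue n A \<gamma> \<longleftrightarrow>
     (\<exists>r. (\<forall>i<n. signed (r i)) \<and>
          (\<forall>x. signed x \<longrightarrow> scharpoly n A x = (\<Prod>i<n. ssub x (r i))) \<and>
          card {i. i < n \<and> r i = \<gamma>} = 1)"

end

theory Submission
  imports Defs
begin

section \<open>Semiring structure\<close>

lemma smax_distrib:
  fixes a b c :: "'a::linordered_ab_group_add smax"
  shows "(a + b) * c = a * c + b * c"
proof (cases c)
  case SZero then show ?thesis by (cases a; cases b) simp_all
next
  case (SPos z) then show ?thesis
    by (cases a; cases b) (auto simp: not_less)
next
  case (SNeg z) then show ?thesis
    by (cases a; cases b) (auto simp: not_less)
next
  case (SBal z) then show ?thesis
    by (cases a; cases b) (auto simp: not_less)
qed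

instance smax :: (linordered_ab_group_add) comm_semiring_1
proof
  fix a b c :: "'a smax"
  show "(a + b) * c = a * c + b * c" by (rule smax_distrib)
  show "0 * a = 0" by (simp add: zero_smax_def)
  show "a * 0 = 0" by (cases a) (simp_all add: zero_smax_def)
  show "(0::'a smax) \<noteq> 1" by (simp add: zero_smax_def one_smax_def)
qed

type_synonym 'a sm = "'a smax"

lemma SZero_is_0: "SZero = 0" by (simp add: zero_smax_def)

lemma add_0_iff:
  fixes a b :: "'a::linordered_ab_group_add smax"
  shows "a + b = 0 \<longleftrightarrow> a = 0 \<and> b = 0"
  by (cases a; cases b) (auto simp: zero_smax_def)

lemma mult_0_iff:
  fixes a b :: "'a::linordered_ab_group_add smax"
  shows "a * b = 0 \<longleftrightarrow> a = 0 \<or> b = 0"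
  by (cases a; cases b) (auto simp: zero_smax_def)

lemma smod_mult:
  fixes a b :: "'a::linordered_ab_group_add smax"
  shows "a \<noteq> 0 \<Longrightarrow> b \<noteq> 0 \<Longrightarrow> smod (a * b) = smod a + smod b"
  by (cases a; cases b) (auto simp: zero_smax_def)

lemma smod_add:
  fixes a b :: "'a::linordered_ab_group_add smax"
  shows "a \<noteq> 0 \<Longrightarrow> b \<noteq> 0 \<Longrightarrow> smod (a + b) = max (smod a) (smod b)"
  by (cases a; cases b) (auto simp: zero_smax_def max_def)

lemma smod_one[simp]: "smod (1::'a::linordered_ab_group_add smax) = 0"
  by (simp add: one_smax_def)

lemma sminus_add:
  fixes a b :: "'a::linordered_ab_group_add smax"
  shows "sminus (a + b) = sminus a + sminus b"
  by (cases a; cases b) auto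

lemma sminus_mult:
  fixes a b :: "'a::linordered_ab_group_add smax"
  shows "sminus (a * b) = sminus a * b"
  by (cases a; cases b) auto

lemma sminus_mult2:
  fixes a b :: "'a::linordered_ab_group_add smax"
  shows "sminus (a * b) = a * sminus b"
  by (cases a; cases b) auto

lemma sminus_sminus[simp]: "sminus (sminus a) = a"
  by (cases a) auto

lemma sminus_0[simp]: "sminus (0::'a::linordered_ab_group_add smax) = 0"
  by (simp add: zero_smax_def)

lemma sminus_0_iff[simp]: "sminus (a::'a::linordered_ab_group_add smax) = 0 \<longleftrightarrow> a = 0"
  by (cases a) (auto simp: zero_smax_def)

lemma smod_sminus[simp]: "smod (sminus a) = smod a"
  by (cases a) auto

lemma sminus_one_mult: "sminus 1 * (a::'a::linordered_ab_group_add smax) = sminus a"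
  by (metis mult_1 sminus_mult)

lemma sminus_sum:
  fixes f :: "'b \<Rightarrow> 'a::linordered_ab_group_add smax"
  shows "sminus (sum f A) = sum (\<lambda>x. sminus (f x)) A"
  by (induction A rule: infinite_finite_induct) (simp_all add: sminus_add)

lemma sminus_one_sq: "sminus 1 * sminus (1::'a::linordered_ab_group_add smax) = 1"
  by (simp add: one_smax_def)

lemma sminus_one_pow2: "(sminus 1 :: 'a::linordered_ab_group_add smax) ^ (2*q) = 1"
  by (simp add: power_mult power2_eq_square sminus_one_sq)

lemma sminus_one_pow_even:
  "even m \<Longrightarrow> (sminus 1) ^ m = (1::'a::linordered_ab_group_add smax)"
  by (erule evenE) (simp add: sminus_one_pow2)

lemma sminus_one_pow_odd:
  "odd m \<Longrightarrow> (sminus 1) ^ m = sminus (1::'a::linordered_ab_group_add smax)"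
  by (erule oddE) (simp add: sminus_one_pow2)

section \<open>Modulus domination\<close>

definition sdom :: "'a::linordered_ab_group_add smax \<Rightarrow> 'a smax \<Rightarrow> bool" where
  "sdom y x \<longleftrightarrow> y = 0 \<or> (x \<noteq> 0 \<and> smod y < smod x)"

lemma sdom_add: "sdom y x \<Longrightarrow> x + y = x"
  unfolding sdom_def
  by (cases x; cases y) (auto simp: zero_smax_def)

lemma add_nonzero_le:
  fixes a b :: "'a::linordered_ab_group_add smax"
  assumes "a \<noteq> 0"
  shows "a + b \<noteq> 0 \<and> smod a \<le> smod (a + b)"
  using assms by (cases a; cases b) (auto simp: zero_smax_def)

lemma sum_eq_0_iff:
  fixes f :: "'b \<Rightarrow> 'a::linordered_ab_group_add smax"
  shows "finite A \<Longrightarrow> sum f A = 0 \<longleftrightarrow> (\<forall>x\<in>A. f x = 0)"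
  by (induction A rule: finite_induct) (auto simp: add_0_iff)

lemma sum_term_le:
  fixes f :: "'b \<Rightarrow> 'a::linordered_ab_group_add smax"
  assumes "finite A" "x \<in> A" "f x \<noteq> 0"
  shows "sum f A \<noteq> 0 \<and> smod (f x) \<le> smod (sum f A)"
proof -
  have "sum f A = f x + sum f (A - {x})"
    using assms by (simp add: sum.remove)
  then show ?thesis using add_nonzero_le[OF assms(3)] by simp
qed

lemma sdom_sum:
  fixes f :: "'b \<Rightarrow> 'a::linordered_ab_group_add smax"
  assumes "finite A" "x \<in> A" "f x \<noteq> 0" "sdom y (f x)"
  shows "sdom y (sum f A)"
  using sum_term_le[of A x f] assms unfolding sdom_def by auto

lemma add_sum_sdom:
  fixes g :: "'b \<Rightarrow> 'a::linordered_ab_group_add smax"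
  assumes "finite T" "\<And>t. t \<in> T \<Longrightarrow> sdom (g t) s"
  shows "s + sum g T = s"
  using assms
proof (induction T rule: finite_induct)
  case empty then show ?case by simp
next
  case (insert t T)
  have ih: "s + sum g T = s" using insert.IH insert.prems by blast
  have "s + sum g (insert t T) = (s + sum g T) + g t"
    using insert(1,2) by (simp add: add_ac)
  also have "\<dots> = s + g t" using ih by simp
  also have "\<dots> = s" using insert by (simp add: sdom_add)
  finally show ?case .
qed

lemma sum_bound_lt:
  fixes f :: "'b \<Rightarrow> 'a::linordered_ab_group_add smax"
  assumes "finite A" "\<And>x. x \<in> A \<Longrightarrow> f x = 0 \<or> smod (f x) < c"
  shows "sum f A = 0 \<or> smod (sum f A) < c"
  using assms
proof (induction A rule: finite_induct)
  case empty then show ?case by simp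
next
  case (insert x A)
  then have h1: "f x = 0 \<or> smod (f x) < c" and h2: "sum f A = 0 \<or> smod (sum f A) < c" by auto
  show ?case
  proof (cases "f x = 0 \<or> sum f A = 0")
    case True then show ?thesis using h1 h2 insert(1,2) by auto
  next
    case False then show ?thesis using h1 h2 insert(1,2) smod_add[of "f x" "sum f A"] add_nonzero_le[of "f x" "sum f A"] by (auto simp: max_def)
  qed
qed

lemma sum_bound_le:
  fixes f :: "'b \<Rightarrow> 'a::linordered_ab_group_add smax"
  assumes "finite A" "\<And>x. x \<in> A \<Longrightarrow> f x = 0 \<or> smod (f x) \<le> c"
  shows "sum f A = 0 \<or> smod (sum f A) \<le> c"
  using assms
proof (induction A rule: finite_induct)
  case empty then show ?case by simp
next
  case (insert x A)
  then have h1: "f x = 0 \<or> smod (f x) \<le> c" and h2: "sum f A = 0 \<or> smod (sum f A) \<le> c" by auto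
  show ?case
  proof (cases "f x = 0 \<or> sum f A = 0")
    case True then show ?thesis using h1 h2 insert(1,2) by auto
  next
    case False then show ?thesis using h1 h2 insert(1,2) smod_add[of "f x" "sum f A"] add_nonzero_le[of "f x" "sum f A"] by (auto simp: max_def)
  qed
qed

lemma prod_nonzero:
  fixes f :: "'b \<Rightarrow> 'a::linordered_ab_group_add smax"
  shows "finite A \<Longrightarrow> (\<forall>x\<in>A. f x \<noteq> 0) \<Longrightarrow> prod f A \<noteq> 0"
  by (induction A rule: finite_induct) (auto simp: mult_0_iff)

lemma prod_zero_iff:
  fixes f :: "'b \<Rightarrow> 'a::linordered_ab_group_add smax"
  shows "finite A \<Longrightarrow> prod f A = 0 \<longleftrightarrow> (\<exists>x\<in>A. f x = 0)"
  by (induction A rule: finite_induct) (auto simp: mult_0_iff)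

lemma prod_smod:
  fixes f :: "'b \<Rightarrow> 'a::linordered_ab_group_add smax"
  shows "finite A \<Longrightarrow> (\<forall>x\<in>A. f x \<noteq> 0) \<Longrightarrow> smod (prod f A) = (\<Sum>x\<in>A. smod (f x))"
  by (induction A rule: finite_induct) (auto simp: smod_mult prod_nonzero)

section \<open>Signed and balanced\<close>

lemma signed_cases: "signed x \<longleftrightarrow> x = 0 \<or> (\<exists>a. x = SPos a) \<or> (\<exists>a. x = SNeg a)"
  by (cases x) (auto simp: signed_def zero_smax_def)

lemma balanced_add: "balanced a \<Longrightarrow> balanced b \<Longrightarrow> balanced ((a::'a::linordered_ab_group_add smax) + b)"
  by (cases a; cases b) (auto simp: balanced_def zero_smax_def)

lemma balanced_sminus[simp]: "balanced (sminus a) \<longleftrightarrow> balanced a"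
  by (cases a) (auto simp: balanced_def)

lemma signed_sminus[simp]: "signed (sminus a) \<longleftrightarrow> signed a"
  by (cases a) (auto simp: signed_def)

lemma signed_mult: "signed a \<Longrightarrow> signed b \<Longrightarrow> signed ((a::'a::linordered_ab_group_add smax) * b)"
  by (cases a; cases b) (auto simp: signed_def)

lemma signed_eq_of_bal:
  fixes a b :: "'a::linordered_ab_group_add smax"
  assumes "signed a" "signed b" "balanced (a + sminus b)"
  shows "a = b"
  using assms by (cases a; cases b) (auto simp: signed_def balanced_def zero_smax_def split: if_splits)

lemma signed_nonzero_not_bal: "signed a \<Longrightarrow> a \<noteq> 0 \<Longrightarrow> \<not> balanced a"
  by (cases a) (auto simp: signed_def balanced_def zero_smax_def)

lemma bal_row:
  fixes g :: "'b \<Rightarrow> 'a::linordered_ab_group_add smax"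
  assumes "finite L" "signed a" "a \<noteq> 0" "balanced (a + sum g L)"
  shows "\<exists>l\<in>L. g l \<noteq> 0 \<and> smod a \<le> smod (g l)"
proof (rule ccontr)
  assume "\<not> ?thesis"
  then have "\<And>l. l \<in> L \<Longrightarrow> sdom (g l) a" unfolding sdom_def using assms(3) by force
  then have "a + sum g L = a" using add_sum_sdom[OF assms(1)] by blast
  then show False using assms signed_nonzero_not_bal by metis
qed

definition sok :: "'a::linordered_ab_group_add smax \<Rightarrow> 'a smax \<Rightarrow> bool" where
  "sok s z \<longleftrightarrow> z = 0 \<or> (z \<noteq> 0 \<and> smod z < smod s) \<or> z = s"

lemma sok_add_split:
  fixes s x y :: "'a::linordered_ab_group_add smax"
  assumes "signed s" "s \<noteq> 0" "sok s (x + y)"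
  shows "sok s x \<and> sok s y"
  using assms unfolding sok_def
  by (cases s; cases x; cases y) (auto simp: signed_def zero_smax_def split: if_splits)

lemma sok_sum_terms:
  fixes g :: "'b \<Rightarrow> 'a::linordered_ab_group_add smax"
  assumes "finite L" "signed s" "s \<noteq> 0" "sok s (sum g L)"
  shows "\<forall>l\<in>L. sok s (g l)"
  using assms
proof (induction L rule: finite_induct)
  case empty then show ?case by simp
next
  case (insert x F)
  then have "sok s (g x + sum g F)" by simp
  then have "sok s (g x) \<and> sok s (sum g F)" using sok_add_split insert by blast
  then show ?case using insert by auto
qed

lemma sok_add_s:
  fixes s z :: "'a::linordered_ab_group_add smax"
  shows "s \<noteq> 0 \<Longrightarrow> sok s z \<Longrightarrow> s + z = s"
  unfolding sok_def by (cases s; cases z) (auto simp: zero_smax_def)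

lemma add_sum_sok:
  fixes g :: "'b \<Rightarrow> 'a::linordered_ab_group_add smax"
  assumes "finite T" "s \<noteq> 0" "\<And>t. t \<in> T \<Longrightarrow> sok s (g t)"
  shows "s + sum g T = s"
  using assms
proof (induction T rule: finite_induct)
  case empty then show ?case by simp
next
  case (insert t T)
  have ih: "s + sum g T = s" using insert.IH insert.prems by blast
  have "s + sum g (insert t T) = (s + sum g T) + g t"
    using insert(1,2) by (simp add: add_ac)
  also have "\<dots> = s + g t" using ih by simp
  also have "\<dots> = s" using insert sok_add_s by blast
  finally show ?case .
qed

lemma sum_replace:
  fixes g h :: "'b \<Rightarrow> 'a::linordered_ab_group_add smax"
  assumes "finite L" "signed s" "s \<noteq> 0" "sum g L = s"
    and "\<And>l. l \<in> L \<Longrightarrow> h l = g l \<or> h l = 0 \<or> smod (h l) < smod s"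
    and "l0 \<in> L" "h l0 = g l0" "g l0 \<noteq> 0" "smod (g l0) = smod s"
  shows "sum h L = s"
proof -
  have okg: "\<forall>l\<in>L. sok s (g l)" using sok_sum_terms[OF assms(1-3)] assms(4) by (simp add: sok_def)
  have okh: "\<forall>l\<in>L. sok s (h l)" using okg assms(5) unfolding sok_def by fastforce
  have "h l0 = s" using okg assms(6-9) unfolding sok_def by auto
  have "sum h L = h l0 + sum h (L - {l0})" using assms by (simp add: sum.remove)
  also have "\<dots> = s"
    using add_sum_sok[of "L - {l0}" s h] okh assms(1,3) \<open>h l0 = s\<close> by auto
  finally show ?thesis .
qed

lemma ssign_nonzero[simp]: "ssign p \<noteq> (0::'a::linordered_ab_group_add smax)"
  by (simp add: ssign_def one_smax_def zero_smax_def)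

lemma smod_ssign[simp]: "smod (ssign p :: 'a::linordered_ab_group_add smax) = 0"
  by (simp add: ssign_def one_smax_def)

lemma signed_ssign[simp]: "signed (ssign p :: 'a::linordered_ab_group_add smax)"
  by (simp add: ssign_def one_smax_def signed_def)

lemma ssign_id[simp]: "ssign id = (1::'a::linordered_ab_group_add smax)"
  by (simp add: ssign_def)

lemma double_less_imp_less:
  fixes x y :: "'a::linordered_ab_group_add"
  shows "x + x < y + y \<Longrightarrow> x < y"
  by (meson add_mono not_less)

lemma cycle_lt:
  fixes M :: "nat \<Rightarrow> nat \<Rightarrow> 'a::linordered_ab_group_add smax" and \<rho> :: "nat \<Rightarrow> nat"
  assumes fin: "finite S" and inj: "inj_on \<rho> S" and img: "\<rho> ` S \<subseteq> S"
    and nzr: "\<forall>r\<in>S. M r (\<rho> r) \<noteq> 0"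
    and dom: "\<forall>r\<in>S. \<forall>c\<in>S. r \<noteq> c \<longrightarrow> M r c = 0 \<or> smod (M r c) + smod (M r c) < smod (M r r) + smod (M c c)"
    and ex: "\<exists>r\<in>S. \<rho> r \<noteq> r"
  shows "(\<Sum>r\<in>S. smod (M r (\<rho> r))) < (\<Sum>r\<in>S. smod (M r r))"
proof -
  have eq: "\<rho> ` S = S" using endo_inj_surj[OF fin img inj] .
  have re: "(\<Sum>r\<in>S. smod (M (\<rho> r) (\<rho> r))) = (\<Sum>r\<in>S. smod (M r r))"
    using sum.reindex[OF inj, of "\<lambda>r. smod (M r r)"] eq by simp
  have "(\<Sum>r\<in>S. smod (M r (\<rho> r)) + smod (M r (\<rho> r))) < (\<Sum>r\<in>S. smod (M r r) + smod (M (\<rho> r) (\<rho> r)))"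
  proof (rule sum_strict_mono_ex1[OF fin])
    show "\<forall>x\<in>S. smod (M x (\<rho> x)) + smod (M x (\<rho> x)) \<le> smod (M x x) + smod (M (\<rho> x) (\<rho> x))"
    proof
      fix x assume x: "x \<in> S"
      show "smod (M x (\<rho> x)) + smod (M x (\<rho> x)) \<le> smod (M x x) + smod (M (\<rho> x) (\<rho> x))"
      proof (cases "\<rho> x = x")
        case True then show ?thesis by simp
      next
        case False
        then show ?thesis using dom x img nzr by fastforce
      qed
    qed
    show "\<exists>x\<in>S. smod (M x (\<rho> x)) + smod (M x (\<rho> x)) < smod (M x x) + smod (M (\<rho> x) (\<rho> x))"
    proof -
      obtain x where x: "x \<in> S" "\<rho> x \<noteq> x" using ex by blast
      then have "\<rho> x \<in> S" using img by blast
      then show ?thesis using x dom nzr by (metis (no_types, lifting))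
    qed
  qed
  then have "(\<Sum>r\<in>S. smod (M r (\<rho> r))) + (\<Sum>r\<in>S. smod (M r (\<rho> r))) < (\<Sum>r\<in>S. smod (M r r)) + (\<Sum>r\<in>S. smod (M r r))"
    using re by (simp add: sum.distrib)
  then show ?thesis by (rule double_less_imp_less)
qed

definition sdominant :: "nat set \<Rightarrow> (nat \<Rightarrow> nat \<Rightarrow> 'a::linordered_ab_group_add smax) \<Rightarrow> bool" where
  "sdominant S M \<longleftrightarrow> (\<forall>r\<in>S. M r r \<noteq> 0) \<and>
     (\<forall>r\<in>S. \<forall>c\<in>S. r \<noteq> c \<longrightarrow> M r c = 0 \<or> smod (M r c) + smod (M r c) < smod (M r r) + smod (M c c))"

lemma perm_term_dom:
  fixes M :: "nat \<Rightarrow> nat \<Rightarrow> 'a::linordered_ab_group_add smax"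
  assumes dm: "sdominant {..<m} M" and p: "p permutes {..<m}" and ne: "p \<noteq> id"
  shows "sdom (ssign p * (\<Prod>i<m. M i (p i))) (\<Prod>i<m. M i i)"
proof (cases "(\<Prod>i<m. M i (p i)) = 0")
  case True then show ?thesis by (simp add: sdom_def)
next
  case False
  then have nz: "\<forall>i\<in>{..<m}. M i (p i) \<noteq> 0" using prod_zero_iff[of "{..<m}"] by auto
  have nzd: "\<forall>i\<in>{..<m}. M i i \<noteq> 0" using dm by (simp add: sdominant_def)
  have ex: "\<exists>r\<in>{..<m}. p r \<noteq> r"
  proof (rule ccontr)
    assume "\<not> ?thesis"
    then have "\<forall>r. p r = r" using permutes_not_in[OF p] by auto
    then show False using ne by auto
  qed
  have lt: "(\<Sum>r\<in>{..<m}. smod (M r (p r))) < (\<Sum>r\<in>{..<m}. smod (M r r))"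
    by (rule cycle_lt) (use nz dm ex permutes_inj[OF p] permutes_image[OF p] in \<open>auto simp: sdominant_def inj_on_def\<close>)
  have e1: "smod (\<Prod>i<m. M i (p i)) = (\<Sum>r\<in>{..<m}. smod (M r (p r)))"
    using prod_smod[of "{..<m}" "\<lambda>i. M i (p i)"] nz by simp
  have e2: "smod (\<Prod>i<m. M i i) = (\<Sum>r\<in>{..<m}. smod (M r r))"
    using prod_smod[of "{..<m}" "\<lambda>i. M i i"] nzd by simp
  have nz2: "(\<Prod>i<m. M i i) \<noteq> 0" using prod_nonzero[of "{..<m}" "\<lambda>i. M i i"] nzd by simp
  have e3: "smod (ssign p * (\<Prod>i<m. M i (p i))) = smod (\<Prod>i<m. M i (p i))"
    using smod_mult[OF ssign_nonzero False] by simp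
  show ?thesis unfolding sdom_def using e1 e2 e3 nz2 lt by simp
qed

lemma sdet_dom:
  fixes M :: "nat \<Rightarrow> nat \<Rightarrow> 'a::linordered_ab_group_add smax"
  assumes dm: "sdominant {..<m} M"
  shows "sdet m M = (\<Prod>i<m. M i i)"
proof -
  let ?P = "{p. p permutes {..<m}}"
  let ?t = "\<lambda>p. ssign p * (\<Prod>i<m. M i (p i))"
  have fin: "finite ?P" by (simp add: finite_permutations)
  have idP: "id \<in> ?P" by (simp add: permutes_id)
  have "sdet m M = ?t id + sum ?t (?P - {id})"
    unfolding sdet_def by (rule sum.remove[OF fin idP])
  also have "\<dots> = (\<Prod>i<m. M i i) + sum ?t (?P - {id})" by simp
  also have "\<dots> = (\<Prod>i<m. M i i)"
    by (rule add_sum_sdom) (use fin perm_term_dom[OF dm] in auto)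
  finally show ?thesis .
qed


section \<open>Cofactor expansion\<close>

definition cyc :: "nat \<Rightarrow> nat \<Rightarrow> nat \<Rightarrow> nat" where
  "cyc m j r = (if r < m then skip j r else if r = m then j else r)"

lemma cyc_step:
  assumes "j < m"
  shows "cyc m j = transpose j (Suc j) \<circ> cyc m (Suc j)"
proof
  fix r
  show "cyc m j r = (transpose j (Suc j) \<circ> cyc m (Suc j)) r"
    using assms unfolding cyc_def skip_def transpose_def by auto
qed

lemma cyc_top: "cyc m m = id"
  unfolding cyc_def skip_def by auto

lemma cyc_props_aux:
  "d \<le> m \<Longrightarrow> cyc m (m - d) permutes {..<Suc m} \<and> evenperm (cyc m (m - d)) = even d"
proof (induction d)
  case 0 then show ?case by (simp add: cyc_top permutes_def)
next
  case (Suc d)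
  let ?j = "m - Suc d"
  have j: "?j < m" "Suc ?j = m - d" using Suc.prems by auto
  have IH: "cyc m (m - d) permutes {..<Suc m}" "evenperm (cyc m (m - d)) = even d"
    using Suc by auto
  have eq: "cyc m ?j = transpose ?j (Suc ?j) \<circ> cyc m (m - d)"
    using cyc_step[OF j(1)] j(2) by simp
  have pt: "transpose ?j (Suc ?j) permutes {..<Suc m}"
    by (rule permutes_swap_id) (use j in auto)
  have p1: "cyc m ?j permutes {..<Suc m}"
    unfolding eq by (rule permutes_compose[OF IH(1) pt])
  have "evenperm (cyc m ?j) = (evenperm (transpose ?j (Suc ?j)) = evenperm (cyc m (m - d)))"
    unfolding eq
    by (rule evenperm_comp) (use pt IH(1) permutation_permutes in blast)+
  also have "\<dots> = even (Suc d)" using IH(2) by (simp add: evenperm_swap)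
  finally show ?case using p1 by simp
qed

lemma cyc_permutes: "j \<le> m \<Longrightarrow> cyc m j permutes {..<Suc m}"
  using cyc_props_aux[of "m - j" m] by simp

lemma cyc_evenperm: "j \<le> m \<Longrightarrow> evenperm (cyc m j) = even (m - j)"
  using cyc_props_aux[of "m - j" m] by simp

lemma cyc_m: "cyc m j m = j" by (simp add: cyc_def)

lemma cyc_lt: "r < m \<Longrightarrow> cyc m j r = skip j r" by (simp add: cyc_def)

lemma cyc_image: "j \<le> m \<Longrightarrow> cyc m j ` {..<m} = {..<Suc m} - {j}"
proof -
  assume j: "j \<le> m"
  have p: "cyc m j permutes {..<Suc m}" using cyc_permutes[OF j] .
  have all: "cyc m j ` {..<Suc m} = {..<Suc m}" using permutes_image[OF p] .
  have "{..<Suc m} = insert m {..<m}" by auto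
  then have "cyc m j ` {..<Suc m} = insert j (cyc m j ` {..<m})" by (simp add: cyc_m)
  moreover have "j \<notin> cyc m j ` {..<m}"
  proof
    assume "j \<in> cyc m j ` {..<m}"
    then obtain r where "r < m" "cyc m j r = j" by auto
    then have "cyc m j r = cyc m j m" by (simp add: cyc_m)
    then have "r = m" using permutes_inj[OF p] by (simp add: inj_eq)
    then show False using \<open>r < m\<close> by simp
  qed
  ultimately show ?thesis using all by auto
qed

lemma ssign_parity:
  fixes \<sigma> :: "nat \<Rightarrow> nat"
  assumes "evenperm \<pi> = (even (m - l) = (evenperm \<sigma> = even (m - k)))" "l \<le> m" "k \<le> m"
  shows "(sminus 1) ^ (l + k) * ssign \<sigma> = (ssign \<pi> :: 'a::linordered_ab_group_add smax)"
proof -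
  have par: "even (l + k) = (even (m - l) = even (m - k))" using assms(2,3) by presburger
  show ?thesis
  proof (cases "even (l + k)")
    case True
    then show ?thesis using assms(1) par sminus_one_pow_even[OF True]
      by (auto simp: ssign_def)
  next
    case False
    then show ?thesis using assms(1) par sminus_one_pow_odd[OF False] sminus_one_sq
      by (auto simp: ssign_def)
  qed
qed

lemma cofactor:
  fixes B :: "nat \<Rightarrow> nat \<Rightarrow> 'a::linordered_ab_group_add smax"
  assumes k: "k < Suc m" and l: "l < Suc m"
  shows "(sminus 1) ^ (l + k) * sdet m (sminor B k l) =
    (\<Sum>\<pi>\<in>{\<pi>. \<pi> permutes {..<Suc m} \<and> \<pi> k = l}. ssign \<pi> * (\<Prod>r\<in>{..<Suc m} - {k}. B r (\<pi> r)))"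
proof -
  define ck where "ck = cyc m k"
  define cl where "cl = cyc m l"
  have pk: "ck permutes {..<Suc m}" unfolding ck_def by (rule cyc_permutes) (use k in auto)
  have pl: "cl permutes {..<Suc m}" unfolding cl_def by (rule cyc_permutes) (use l in auto)
  define \<Phi> where "\<Phi> = (\<lambda>\<sigma>::nat\<Rightarrow>nat. cl \<circ> \<sigma> \<circ> inv ck)"
  define \<Psi> where "\<Psi> = (\<lambda>\<pi>::nat\<Rightarrow>nat. inv cl \<circ> \<pi> \<circ> ck)"
  let ?S = "{\<sigma>. \<sigma> permutes {..<m}}"
  let ?T = "{\<pi>. \<pi> permutes {..<Suc m} \<and> \<pi> k = l}"
  have "(sminus 1) ^ (l + k) * sdet m (sminor B k l) =
     (\<Sum>\<sigma>\<in>?S. (sminus 1) ^ (l + k) * (ssign \<sigma> * (\<Prod>r<m. B (skip k r) (skip l (\<sigma> r)))))"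
    unfolding sdet_def sminor_def by (simp add: sum_distrib_left)
  also have "\<dots> = (\<Sum>\<pi>\<in>?T. ssign \<pi> * (\<Prod>r\<in>{..<Suc m} - {k}. B r (\<pi> r)))"
  proof (rule sum.reindex_bij_witness[where i = \<Psi> and j = \<Phi>])
    fix \<sigma> assume "\<sigma> \<in> ?S"
    then have ps: "\<sigma> permutes {..<m}" by simp
    show "\<Psi> (\<Phi> \<sigma>) = \<sigma>"
    proof
      fix x show "\<Psi> (\<Phi> \<sigma>) x = \<sigma> x"
        unfolding \<Phi>_def \<Psi>_def using permutes_inverses(2)[OF pl, of "\<sigma> (inv ck (ck x))"]
          permutes_inverses(2)[OF pk, of x] by simp
    qed
    have ps': "\<sigma> permutes {..<Suc m}" by (rule permutes_subset[OF ps]) auto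
    have "\<Phi> \<sigma> permutes {..<Suc m}"
      unfolding \<Phi>_def by (intro permutes_compose permutes_inv pk pl ps')
    moreover have "\<Phi> \<sigma> k = l"
    proof -
      have "inv ck k = m" using permutes_inverses(2)[OF pk, of m] by (simp add: ck_def cyc_m)
      moreover have "\<sigma> m = m" using permutes_not_in[OF ps] by simp
      ultimately show ?thesis unfolding \<Phi>_def by (simp add: cl_def cyc_m)
    qed
    ultimately show "\<Phi> \<sigma> \<in> ?T" by simp
    have ev: "evenperm (\<Phi> \<sigma>) = (even (m - l) = (evenperm \<sigma> = even (m - k)))"
    proof -
      have pc: "permutation cl" "permutation \<sigma>" "permutation (inv ck)" "permutation ck"
        using pl ps permutes_inv[OF pk] pk permutation_permutes by blast+
      have "evenperm (\<Phi> \<sigma>) = (evenperm cl = evenperm (\<sigma> \<circ> inv ck))"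
        unfolding \<Phi>_def o_assoc[symmetric]
        by (rule evenperm_comp) (use pc permutation_compose in auto)
      also have "evenperm (\<sigma> \<circ> inv ck) = (evenperm \<sigma> = evenperm (inv ck))"
        by (rule evenperm_comp) (use pc in auto)
      also have "evenperm (inv ck) = evenperm ck" by (rule evenperm_inv) (use pc in auto)
      finally show ?thesis
        using cyc_evenperm[of k m] cyc_evenperm[of l m] k l by (simp add: ck_def cl_def)
    qed
    have sg: "(sminus 1) ^ (l + k) * ssign \<sigma> = (ssign (\<Phi> \<sigma>) :: 'a smax)"
      by (rule ssign_parity[OF ev]) (use k l in auto)
    have pr: "(\<Prod>r\<in>{..<Suc m} - {k}. B r (\<Phi> \<sigma> r)) = (\<Prod>r<m. B (skip k r) (skip l (\<sigma> r)))"
    proof -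
      have img: "ck ` {..<m} = {..<Suc m} - {k}" unfolding ck_def by (rule cyc_image) (use k in auto)
      have inj: "inj_on ck {..<m}" by (rule inj_on_subset[OF permutes_inj[OF pk]]) simp
      have "(\<Prod>r\<in>{..<Suc m} - {k}. B r (\<Phi> \<sigma> r)) = (\<Prod>r\<in>ck ` {..<m}. B r (\<Phi> \<sigma> r))"
        using img by simp
      also have "\<dots> = (\<Prod>r<m. B (ck r) (\<Phi> \<sigma> (ck r)))"
        using prod.reindex[OF inj, of "\<lambda>r. B r (\<Phi> \<sigma> r)"] by simp
      also have "\<dots> = (\<Prod>r<m. B (skip k r) (skip l (\<sigma> r)))"
      proof (rule prod.cong[OF refl])
        fix r assume r: "r \<in> {..<m}"
        have sr: "\<sigma> r < m" using permutes_in_image[OF ps] r by simp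
        have e1: "ck r = skip k r" using r by (simp add: ck_def cyc_lt)
        have e2: "cl (\<sigma> r) = skip l (\<sigma> r)" using sr by (simp add: cl_def cyc_lt)
        have e3: "\<Phi> \<sigma> (ck r) = cl (\<sigma> r)" unfolding \<Phi>_def
          using permutes_inverses(2)[OF pk, of r] by simp
        show "B (ck r) (\<Phi> \<sigma> (ck r)) = B (skip k r) (skip l (\<sigma> r))"
          using e1 e2 e3 by simp
      qed
      finally show ?thesis .
    qed
    show "ssign (\<Phi> \<sigma>) * (\<Prod>r\<in>{..<Suc m} - {k}. B r (\<Phi> \<sigma> r)) =
          (sminus 1) ^ (l + k) * (ssign \<sigma> * (\<Prod>r<m. B (skip k r) (skip l (\<sigma> r))))"
      using sg pr by (metis mult.assoc)
  next
    fix \<pi> assume "\<pi> \<in> ?T"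
    then have pp: "\<pi> permutes {..<Suc m}" and pkl: "\<pi> k = l" by auto
    show "\<Phi> (\<Psi> \<pi>) = \<pi>"
    proof
      fix x show "\<Phi> (\<Psi> \<pi>) x = \<pi> x"
        unfolding \<Phi>_def \<Psi>_def using permutes_inverses(1)[OF pl, of "\<pi> (ck (inv ck x))"]
          permutes_inverses(1)[OF pk, of x] by simp
    qed
    have p1: "\<Psi> \<pi> permutes {..<Suc m}"
      unfolding \<Psi>_def by (intro permutes_compose permutes_inv pk pl pp)
    have fm: "\<Psi> \<pi> m = m"
    proof -
      have "cl m = l" by (simp add: cl_def cyc_m)
      then have "inv cl l = m" using permutes_inverses(2)[OF pl, of m] by simp
      then show ?thesis unfolding \<Psi>_def using pkl by (simp add: ck_def cyc_m)
    qed
    have "\<Psi> \<pi> permutes {..<m}"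
      by (rule permutes_superset[OF p1]) (use fm in auto)
    then show "\<Psi> \<pi> \<in> ?S" by simp
  qed
  finally show ?thesis .
qed

section \<open>Orbit lemma\<close>

lemma funpow_in:
  fixes \<pi> :: "nat \<Rightarrow> nat" and n x :: nat
  assumes p: "\<pi> permutes {..<n}" and x: "x < n"
  shows "(\<pi> ^^ t) x < n"
  by (induction t) (use x permutes_in_image[OF p] in auto)

lemma funpow_fix: "f x = x \<Longrightarrow> (f ^^ q) x = x"
  by (induction q) auto

lemma perm_period:
  fixes \<pi> :: "nat \<Rightarrow> nat" and n x :: nat
  assumes p: "\<pi> permutes {..<n}" and x: "x < n"
  shows "\<exists>q\<ge>1. (\<pi> ^^ q) x = x"
proof -
  let ?f = "\<lambda>t. (\<pi> ^^ t) x"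
  have "\<not> inj_on ?f {..n}"
  proof
    assume inj: "inj_on ?f {..n}"
    have "?f ` {..n} \<subseteq> {..<n}" using funpow_in[OF p x] by auto
    then have "card {..n} \<le> card {..<n}" using card_inj_on_le[OF inj, of "{..<n}"] by blast
    then show False by simp
  qed
  then obtain a b where ab: "a \<le> n" "b \<le> n" "a \<noteq> b" "?f a = ?f b"
    unfolding inj_on_def by auto
  have "\<exists>a b. a < b \<and> ?f a = ?f b"
  proof (cases "a < b")
    case True then show ?thesis using ab by blast
  next
    case False then have "b < a" using ab(3) by simp
    then show ?thesis using ab(4) by (intro exI[of _ b] exI[of _ a]) simp
  qed
  then obtain a b where ab: "a < b" "?f a = ?f b" by blast
  have injf: "inj (\<pi> ^^ a)" using inj_fn[OF permutes_inj[OF p]] .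
  have "(\<pi> ^^ b) x = (\<pi> ^^ (a + (b - a))) x" using ab(1) by simp
  also have "\<dots> = (\<pi> ^^ a) ((\<pi> ^^ (b - a)) x)" by (simp add: funpow_add)
  finally have "(\<pi> ^^ a) ((\<pi> ^^ (b - a)) x) = (\<pi> ^^ b) x" by simp
  then have "(\<pi> ^^ a) ((\<pi> ^^ (b - a)) x) = (\<pi> ^^ a) x" using ab(2) by simp
  then have "(\<pi> ^^ (b - a)) x = x" using injf by (simp add: inj_eq)
  then show ?thesis using ab(1) by (intro exI[of _ "b - a"]) auto
qed

lemma orbit_split:
  fixes \<pi> :: "nat \<Rightarrow> nat" and n i k :: nat
  assumes p: "\<pi> permutes {..<n}" and i: "i < n" and k: "k < n" and ik: "i \<noteq> k"
  shows "\<exists>\<rho> S. (\<rho> = \<pi> \<or> \<rho> = \<pi> \<circ> transpose i k) \<and> S \<subseteq> {..<n} \<and> i \<in> S \<and> k \<notin> S \<and> \<rho> ` S \<subseteq> S"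
proof (cases "\<exists>t. (\<pi> ^^ t) i = k")
  case False
  let ?O = "{y. \<exists>t. (\<pi> ^^ t) i = y}"
  have "?O \<subseteq> {..<n}" using funpow_in[OF p i] by auto
  moreover have "i \<in> ?O" by (auto intro: exI[of _ 0])
  moreover have "k \<notin> ?O" using False by auto
  moreover have "\<pi> ` ?O \<subseteq> ?O"
  proof
    fix y assume "y \<in> \<pi> ` ?O"
    then obtain t where "y = \<pi> ((\<pi> ^^ t) i)" by auto
    then have "y = (\<pi> ^^ Suc t) i" by simp
    then show "y \<in> ?O" by blast
  qed
  ultimately show ?thesis by blast
next
  case True
  then obtain t1 where t1: "(\<pi> ^^ t1) i = k" by blast
  obtain q where q: "q \<ge> 1" "(\<pi> ^^ q) i = i" using perm_period[OF p i] by blast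
  have ex: "\<exists>t. 1 \<le> t \<and> (\<pi> ^^ t) k = i"
  proof -
    let ?t = "q * (t1 + 1) - t1"
    have ge: "q * (t1 + 1) \<ge> t1 + 1" using q(1) mult_le_mono1[of 1 q "t1+1"] by simp
    have "(\<pi> ^^ (q * (t1 + 1))) i = i"
      using funpow_fix[of "\<pi> ^^ q" i "t1 + 1"] q(2) by (simp add: funpow_mult)
    moreover have "(\<pi> ^^ ?t) k = (\<pi> ^^ (q * (t1 + 1))) i"
    proof -
      have "(\<pi> ^^ ?t) k = (\<pi> ^^ ?t) ((\<pi> ^^ t1) i)" using t1 by simp
      also have "\<dots> = (\<pi> ^^ (?t + t1)) i" by (simp add: funpow_add)
      also have "?t + t1 = q * (t1 + 1)" using ge by simp
      finally show ?thesis by simp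
    qed
    ultimately show ?thesis using ge by (intro exI[of _ ?t]) auto
  qed
  define t0 where "t0 = (LEAST t. 1 \<le> t \<and> (\<pi> ^^ t) k = i)"
  have t0: "1 \<le> t0" "(\<pi> ^^ t0) k = i"
    using LeastI_ex[OF ex] unfolding t0_def by auto
  have t0min: "\<And>t. 1 \<le> t \<Longrightarrow> t < t0 \<Longrightarrow> (\<pi> ^^ t) k \<noteq> i"
    using not_less_Least unfolding t0_def by blast
  let ?Seg = "{y. \<exists>t. 1 \<le> t \<and> t \<le> t0 \<and> (\<pi> ^^ t) k = y}"
  let ?\<rho> = "\<pi> \<circ> transpose i k"
  have notk: "\<And>t. 1 \<le> t \<Longrightarrow> t \<le> t0 \<Longrightarrow> (\<pi> ^^ t) k \<noteq> k"
  proof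
    fix t assume t: "1 \<le> t" "t \<le> t0" and eq: "(\<pi> ^^ t) k = k"
    show False
    proof (cases "t = t0")
      case True then show False using eq t0 ik by simp
    next
      case False
      have "(\<pi> ^^ (t0 - t)) k = (\<pi> ^^ (t0 - t)) ((\<pi> ^^ t) k)" using eq by simp
      also have "\<dots> = (\<pi> ^^ (t0 - t + t)) k" by (simp add: funpow_add)
      also have "t0 - t + t = t0" using t by simp
      finally have "(\<pi> ^^ (t0 - t)) k = i" using t0 by simp
      moreover have "1 \<le> t0 - t" "t0 - t < t0" using t False by auto
      ultimately show False using t0min by blast
    qed
  qed
  have "?Seg \<subseteq> {..<n}" using funpow_in[OF p k] by auto
  moreover have "i \<in> ?Seg" using t0 by auto
  moreover have "k \<notin> ?Seg" using notk by auto
  moreover have "?\<rho> ` ?Seg \<subseteq> ?Seg"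
  proof
    fix y assume "y \<in> ?\<rho> ` ?Seg"
    then obtain y0 where y0: "y0 \<in> ?Seg" and y: "y = ?\<rho> y0" by blast
    from y0 obtain t where t: "1 \<le> t" "t \<le> t0" and y0t: "y0 = (\<pi> ^^ t) k" by blast
    show "y \<in> ?Seg"
    proof (cases "t = t0")
      case True
      then have "y0 = i" using y0t t0 by simp
      then have "y = \<pi> k" using y by simp
      then have "1 \<le> (1::nat) \<and> 1 \<le> t0 \<and> (\<pi> ^^ 1) k = y" using t0 by simp
      then show ?thesis by blast
    next
      case False
      then have ne1: "y0 \<noteq> i" using t0min t y0t by auto
      have ne2: "y0 \<noteq> k" using notk t y0t by auto
      have "y = \<pi> y0" using y ne1 ne2 by simp
      then have "y = \<pi> ((\<pi> ^^ t) k)" using y0t by simp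
      then have "y = (\<pi> ^^ Suc t) k" by simp
      moreover have "Suc t \<le> t0" using t False by auto
      ultimately have "1 \<le> Suc t \<and> Suc t \<le> t0 \<and> (\<pi> ^^ Suc t) k = y" by simp
      then show ?thesis by blast
    qed
  qed
  ultimately have "?Seg \<subseteq> {..<n} \<and> i \<in> ?Seg \<and> k \<notin> ?Seg \<and> ?\<rho> ` ?Seg \<subseteq> ?Seg" by (intro conjI)
  then show ?thesis by blast
qed


lemma restrict_perm:
  fixes \<rho> :: "nat \<Rightarrow> nat"
  assumes p: "\<rho> permutes U" and S: "S \<subseteq> U" "finite S" and img: "\<rho> ` S \<subseteq> S"
  shows "(\<lambda>x. if x \<in> S then x else \<rho> x) permutes U"
proof -
  have inj: "inj \<rho>" using permutes_inj[OF p] .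
  have injS: "inj_on \<rho> S" by (rule inj_on_subset[OF inj subset_UNIV])
  have eqS: "\<rho> ` S = S" using endo_inj_surj[OF S(2) img injS] .
  let ?r = "\<lambda>x. if x \<in> S then x else \<rho> x"
  show ?thesis unfolding permutes_def
  proof (intro conjI allI impI)
    fix x assume "x \<notin> U"
    then show "?r x = x" using S(1) permutes_not_in[OF p] by auto
  next
    fix y
    show "\<exists>!x. ?r x = y"
    proof (cases "y \<in> S")
      case True
      show ?thesis
      proof (rule ex1I[of _ y])
        show "?r y = y" using True by simp
        fix x assume x: "?r x = y"
        show "x = y"
        proof (cases "x \<in> S")
          case True then show ?thesis using x by simp
        next
          case False
          then have "\<rho> x = y" using x by simp
          moreover have "y \<in> \<rho> ` S" using eqS \<open>y \<in> S\<close> by simp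
          moreover obtain s where "s \<in> S" "\<rho> s = y" using calculation(2) by (auto simp del: image_iff)
          ultimately have "\<rho> x = \<rho> s" by simp
          then have "x = s" by (rule injD[OF inj])
          then show ?thesis using False \<open>s \<in> S\<close> by simp
        qed
      qed
    next
      case False
      have "y = \<rho> (inv \<rho> y)" using permutes_inverses(1)[OF p, of y] by simp
      then obtain x0 where x0: "\<rho> x0 = y" by metis
      have x0S: "x0 \<notin> S" using x0 False img by auto
      show ?thesis
      proof (rule ex1I[of _ x0])
        show "?r x0 = y" using x0 x0S by simp
        fix x assume x: "?r x = y"
        have "x \<notin> S" using x False by (auto split: if_splits)
        then have "\<rho> x = \<rho> x0" using x x0 by simp
        then show "x = x0" by (rule injD[OF inj])
      qed
    qed
  qed
qed

section \<open>The key identity for the adjugate column\<close>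

definition ucol :: "nat \<Rightarrow> (nat \<Rightarrow> nat \<Rightarrow> 'a::linordered_ab_group_add smax) \<Rightarrow> nat \<Rightarrow> nat \<Rightarrow> 'a smax" where
  "ucol n B k l = (\<Sum>\<pi>\<in>{\<pi>. \<pi> permutes {..<n} \<and> \<pi> k = l}. ssign \<pi> * (\<Prod>r\<in>{..<n} - {k}. B r (\<pi> r)))"

definition cprod :: "nat \<Rightarrow> (nat \<Rightarrow> nat \<Rightarrow> 'a::linordered_ab_group_add smax) \<Rightarrow> nat \<Rightarrow> nat \<Rightarrow> (nat \<Rightarrow> nat) \<Rightarrow> 'a smax" where
  "cprod n B i k \<pi> = B i (\<pi> k) * (\<Prod>r\<in>{..<n} - {k}. B r (\<pi> r))"

lemma ssign_comp_transpose:
  assumes p: "\<theta> permutes {..<n}" and ab: "a < n" "b < n" "a \<noteq> b"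
  shows "ssign (\<theta> \<circ> transpose a b) = sminus (ssign \<theta> :: 'a::linordered_ab_group_add smax)"
proof -
  have pt: "transpose a b permutes {..<n}" by (rule permutes_swap_id) (use ab in auto)
  have "evenperm (\<theta> \<circ> transpose a b) = (evenperm \<theta> = evenperm (transpose a b))"
    by (rule evenperm_comp) (use p pt permutation_permutes in blast)+
  then have "evenperm (\<theta> \<circ> transpose a b) = (\<not> evenperm \<theta>)" using ab by (simp add: evenperm_swap)
  then show ?thesis by (simp add: ssign_def)
qed

lemma prod_split_i:
  fixes f :: "nat \<Rightarrow> 'a::linordered_ab_group_add smax"
  assumes "i < n" "i \<noteq> k"
  shows "(\<Prod>r\<in>{..<n} - {k}. f r) = f i * (\<Prod>r\<in>{..<n} - {k} - {i}. f r)"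
  by (rule prod.remove) (use assms in auto)

lemma cprod_swap:
  assumes i: "i < n" "k < n" "i \<noteq> k"
  shows "cprod n B i k (\<pi> \<circ> transpose i k) = cprod n B i k \<pi>"
proof -
  have a1: "(\<Prod>r\<in>{..<n} - {k}. B r ((\<pi> \<circ> transpose i k) r)) = B i ((\<pi> \<circ> transpose i k) i) * (\<Prod>r\<in>{..<n} - {k} - {i}. B r ((\<pi> \<circ> transpose i k) r))"
    by (rule prod_split_i) (use i in auto)
  have a2: "(\<Prod>r\<in>{..<n} - {k} - {i}. B r ((\<pi> \<circ> transpose i k) r)) = (\<Prod>r\<in>{..<n} - {k} - {i}. B r (\<pi> r))"
    by (rule prod.cong) auto
  have b: "(\<Prod>r\<in>{..<n} - {k}. B r (\<pi> r)) = B i (\<pi> i) * (\<Prod>r\<in>{..<n} - {k} - {i}. B r (\<pi> r))"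
    by (rule prod_split_i) (use i in auto)
  have c1: "(\<pi> \<circ> transpose i k) i = \<pi> k" "(\<pi> \<circ> transpose i k) k = \<pi> i" by auto
  show ?thesis unfolding cprod_def a1 a2 b c1 by (simp only: mult.left_commute)
qed

lemma witness:
  fixes B :: "nat \<Rightarrow> nat \<Rightarrow> 'a::linordered_ab_group_add smax"
  assumes dm: "sdominant {..<n} B" and i: "i < n" "k < n" "i \<noteq> k"
    and p: "\<pi> permutes {..<n}" and pk: "\<pi> k \<noteq> i" and pii: "\<pi> i \<noteq> i"
    and nz: "cprod n B i k \<pi> \<noteq> 0"
  shows "\<exists>\<pi>''. \<pi>'' permutes {..<n} \<and> \<pi>'' i = i \<and> \<pi>'' k \<noteq> i \<and> cprod n B i k \<pi>'' \<noteq> 0 \<and>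
            smod (cprod n B i k \<pi>) < smod (cprod n B i k \<pi>'')"
proof -
  obtain \<rho> S where rs: "\<rho> = \<pi> \<or> \<rho> = \<pi> \<circ> transpose i k" and S: "S \<subseteq> {..<n}" "i \<in> S" "k \<notin> S"
    and img: "\<rho> ` S \<subseteq> S"
    using orbit_split[OF p i] by blast
  have pt: "transpose i k permutes {..<n}" by (rule permutes_swap_id) (use i in auto)
  have pr: "\<rho> permutes {..<n}" using rs permutes_compose[OF pt p] p by auto
  have cr: "cprod n B i k \<rho> = cprod n B i k \<pi>" using rs cprod_swap[OF i] by auto
  have ri0: "\<rho> i \<noteq> i \<and> \<rho> k \<noteq> i"
    using rs
  proof
    assume "\<rho> = \<pi>" then show ?thesis using pk pii by simp
  next
    assume r: "\<rho> = \<pi> \<circ> transpose i k"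
    have "\<rho> i = \<pi> k" "\<rho> k = \<pi> i" unfolding r by simp_all
    then show ?thesis using pk pii by simp
  qed
  then have ri: "\<rho> i \<noteq> i" "\<rho> k \<noteq> i" by auto
  have finS: "finite S" using S(1) finite_subset by blast
  define \<pi>'' where "\<pi>'' = (\<lambda>x. if x \<in> S then x else \<rho> x)"
  have p'': "\<pi>'' permutes {..<n}" unfolding \<pi>''_def by (rule restrict_perm[OF pr S(1) finS img])
  have p''i: "\<pi>'' i = i" "\<pi>'' k = \<rho> k" using S unfolding \<pi>''_def by auto
  let ?R = "{..<n} - {k}"
  have SR: "S \<subseteq> ?R" using S by auto
  have finR: "finite ?R" by simp
  have split: "\<And>f. (\<Prod>r\<in>?R. f r) = (\<Prod>r\<in>?R - S. f r) * (\<Prod>r\<in>S. f r)"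
    by (rule prod.subset_diff[OF SR finR])
  have c1: "cprod n B i k \<rho> = B i (\<rho> k) * ((\<Prod>r\<in>?R - S. B r (\<rho> r)) * (\<Prod>r\<in>S. B r (\<rho> r)))"
    unfolding cprod_def split ..
  have e1: "(\<Prod>r\<in>?R - S. B r (\<pi>'' r)) = (\<Prod>r\<in>?R - S. B r (\<rho> r))"
    by (rule prod.cong) (auto simp: \<pi>''_def)
  have e2: "(\<Prod>r\<in>S. B r (\<pi>'' r)) = (\<Prod>r\<in>S. B r r)"
    by (rule prod.cong) (auto simp: \<pi>''_def)
  have c2: "cprod n B i k \<pi>'' = B i (\<rho> k) * ((\<Prod>r\<in>?R - S. B r (\<rho> r)) * (\<Prod>r\<in>S. B r r))"
    unfolding cprod_def split e1 e2 p''i ..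
  have nzr: "cprod n B i k \<rho> \<noteq> 0" using cr nz by simp
  have nz1: "B i (\<rho> k) \<noteq> 0" "(\<Prod>r\<in>?R - S. B r (\<rho> r)) \<noteq> 0" "(\<Prod>r\<in>S. B r (\<rho> r)) \<noteq> 0"
    using nzr unfolding c1 by (auto simp: mult_0_iff)
  have nzS: "\<forall>r\<in>S. B r (\<rho> r) \<noteq> 0" using nz1(3) prod_zero_iff[OF finS] by auto
  have diag: "\<forall>r\<in>S. B r r \<noteq> 0" using dm S(1) by (auto simp: sdominant_def)
  have nz2: "(\<Prod>r\<in>S. B r r) \<noteq> 0" using prod_nonzero[OF finS, of "\<lambda>r. B r r"] diag by blast
  have lt: "(\<Sum>r\<in>S. smod (B r (\<rho> r))) < (\<Sum>r\<in>S. smod (B r r))"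
  proof (rule cycle_lt[where M=B, OF finS _ img nzS])
    show "inj_on \<rho> S" by (rule inj_on_subset[OF permutes_inj[OF pr] subset_UNIV])
    show "\<forall>r\<in>S. \<forall>c\<in>S. r \<noteq> c \<longrightarrow> B r c = 0 \<or> smod (B r c) + smod (B r c) < smod (B r r) + smod (B c c)"
      using dm S(1) unfolding sdominant_def by blast
    show "\<exists>r\<in>S. \<rho> r \<noteq> r" using S(2) ri(1) by blast
  qed
  have m1: "smod (\<Prod>r\<in>S. B r (\<rho> r)) = (\<Sum>r\<in>S. smod (B r (\<rho> r)))" using prod_smod[OF finS, of "\<lambda>r. B r (\<rho> r)"] nzS by simp
  have m2: "smod (\<Prod>r\<in>S. B r r) = (\<Sum>r\<in>S. smod (B r r))" using prod_smod[OF finS, of "\<lambda>r. B r r"] diag by simp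
  have "smod (cprod n B i k \<rho>) < smod (cprod n B i k \<pi>'')"
    unfolding c1 c2 using nz1 nz2 lt m1 m2 by (simp add: smod_mult mult_0_iff)
  moreover have "cprod n B i k \<pi>'' \<noteq> 0" unfolding c2 using nz1 nz2 by (simp add: mult_0_iff)
  ultimately show ?thesis using p'' p''i ri cr by (intro exI[of _ \<pi>'']) auto
qed

lemma perm_lt: "\<pi> permutes {..<n} \<Longrightarrow> x < (n::nat) \<Longrightarrow> \<pi> x < n"
  using permutes_in_image[of \<pi> "{..<n}" x] by simp

lemma U1:
  fixes B :: "nat \<Rightarrow> nat \<Rightarrow> 'a::linordered_ab_group_add smax"
  assumes dm: "sdominant {..<n} B" and i: "i < n" "k < n" "i \<noteq> k"
  shows "(\<Sum>l\<in>{..<n} - {i}. B i l * ucol n B k l) = sminus (B i i * ucol n B k i)"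
proof -
  let ?P = "{\<pi>. \<pi> permutes {..<n}}"
  let ?P1 = "{\<pi>. \<pi> permutes {..<n} \<and> \<pi> k \<noteq> i}"
  let ?P1a = "{\<pi>. \<pi> permutes {..<n} \<and> \<pi> k \<noteq> i \<and> \<pi> i = i}"
  let ?P1b = "{\<pi>. \<pi> permutes {..<n} \<and> \<pi> k \<noteq> i \<and> \<pi> i \<noteq> i}"
  let ?L = "{..<n} - {i}"
  define F where "F = (\<lambda>\<pi>. ssign \<pi> * cprod n B i k \<pi>)"
  have finP: "finite ?P" by (simp add: finite_permutations)
  have finP1: "finite ?P1" by (rule finite_subset[OF _ finP]) auto
  have finP1a: "finite ?P1a" by (rule finite_subset[OF _ finP]) auto
  have finP1b: "finite ?P1b" by (rule finite_subset[OF _ finP]) auto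
  have s1: "(\<Sum>l\<in>?L. B i l * ucol n B k l) = (\<Sum>l\<in>?L. \<Sum>\<pi>\<in>{\<pi>. \<pi> \<in> ?P1 \<and> \<pi> k = l}. F \<pi>)"
  proof (rule sum.cong[OF refl])
    fix l assume l: "l \<in> ?L"
    have "B i l * ucol n B k l = (\<Sum>\<pi>\<in>{\<pi>. \<pi> permutes {..<n} \<and> \<pi> k = l}. B i l * (ssign \<pi> * (\<Prod>r\<in>{..<n} - {k}. B r (\<pi> r))))"
      unfolding ucol_def by (simp add: sum_distrib_left)
    also have "\<dots> = (\<Sum>\<pi>\<in>{\<pi>. \<pi> \<in> ?P1 \<and> \<pi> k = l}. F \<pi>)"
    proof (rule sum.cong)
      show "{\<pi>. \<pi> permutes {..<n} \<and> \<pi> k = l} = {\<pi>. \<pi> \<in> ?P1 \<and> \<pi> k = l}" using l by auto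
      fix \<pi> assume "\<pi> \<in> {\<pi>. \<pi> \<in> ?P1 \<and> \<pi> k = l}"
      then have "\<pi> k = l" by simp
      then show "B i l * (ssign \<pi> * (\<Prod>r\<in>{..<n} - {k}. B r (\<pi> r))) = F \<pi>"
        unfolding F_def cprod_def by (simp add: mult.left_commute)
    qed
    finally show "B i l * ucol n B k l = (\<Sum>\<pi>\<in>{\<pi>. \<pi> \<in> ?P1 \<and> \<pi> k = l}. F \<pi>)" .
  qed
  also have "\<dots> = sum F ?P1"
    by (rule sum.group[OF finP1]) (use i in \<open>auto intro: perm_lt\<close>)
  also have "?P1 = ?P1a \<union> ?P1b" by auto
  also have "sum F (?P1a \<union> ?P1b) = sum F ?P1a + sum F ?P1b"
    by (rule sum.union_disjoint[OF finP1a finP1b]) auto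
  also have "\<dots> = sum F ?P1a"
  proof (rule add_sum_sdom[OF finP1b])
    fix \<pi> assume "\<pi> \<in> ?P1b"
    then have p: "\<pi> permutes {..<n}" and pk: "\<pi> k \<noteq> i" and pii: "\<pi> i \<noteq> i" by auto
    show "sdom (F \<pi>) (sum F ?P1a)"
    proof (cases "cprod n B i k \<pi> = 0")
      case True then show ?thesis unfolding sdom_def F_def by simp
    next
      case False
      obtain \<pi>'' where w: "\<pi>'' permutes {..<n}" "\<pi>'' i = i" "\<pi>'' k \<noteq> i" "cprod n B i k \<pi>'' \<noteq> 0"
        "smod (cprod n B i k \<pi>) < smod (cprod n B i k \<pi>'')"
        using witness[OF dm i p pk pii False] by blast
      have mem: "\<pi>'' \<in> ?P1a" using w by auto
      have nz: "F \<pi>'' \<noteq> 0" using w(4) unfolding F_def by (simp add: mult_0_iff)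
      have "sdom (F \<pi>) (F \<pi>'')" unfolding sdom_def F_def
        using w(4,5) False by (simp add: smod_mult mult_0_iff)
      then show ?thesis using sdom_sum[of ?P1a \<pi>'' F "F \<pi>"] finP1a mem nz by blast
    qed
  qed
  also have "sum F ?P1a = sminus (B i i * ucol n B k i)"
  proof -
    let ?T = "{\<theta>. \<theta> permutes {..<n} \<and> \<theta> k = i}"
    let ?\<tau> = "transpose i k"
    have pt: "?\<tau> permutes {..<n}" by (rule permutes_swap_id) (use i in auto)
    have inv: "\<And>f. (f \<circ> ?\<tau>) \<circ> ?\<tau> = (f::nat \<Rightarrow> nat)" by (auto simp: fun_eq_iff)
    have "sminus (B i i * ucol n B k i) = (\<Sum>\<theta>\<in>?T. sminus (B i i * (ssign \<theta> * (\<Prod>r\<in>{..<n} - {k}. B r (\<theta> r)))))"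
      unfolding ucol_def by (simp add: sum_distrib_left sminus_sum)
    also have "\<dots> = sum F ?P1a"
    proof (rule sum.reindex_bij_witness[where i = "\<lambda>\<pi>. \<pi> \<circ> ?\<tau>" and j = "\<lambda>\<theta>. \<theta> \<circ> ?\<tau>"])
      fix \<theta> assume "\<theta> \<in> ?T"
      then have p: "\<theta> permutes {..<n}" and tk: "\<theta> k = i" by auto
      show "\<theta> \<circ> ?\<tau> \<circ> ?\<tau> = \<theta>" by (rule inv)
      have "\<theta> i \<noteq> \<theta> k" using permutes_inj[OF p] i(3) by (auto simp: inj_def)
      then have "(\<theta> \<circ> ?\<tau>) k \<noteq> i" "(\<theta> \<circ> ?\<tau>) i = i" using tk by auto
      then show "\<theta> \<circ> ?\<tau> \<in> ?P1a" using permutes_compose[OF pt p] by auto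
      have sg: "ssign (\<theta> \<circ> ?\<tau>) = sminus (ssign \<theta> :: 'a smax)"
        by (rule ssign_comp_transpose[OF p]) (use i in auto)
      have cp: "cprod n B i k (\<theta> \<circ> ?\<tau>) = B i i * (\<Prod>r\<in>{..<n} - {k}. B r (\<theta> r))"
        using cprod_swap[OF i, where \<pi>=\<theta> and B=B] tk unfolding cprod_def by simp
      show "F (\<theta> \<circ> ?\<tau>) = sminus (B i i * (ssign \<theta> * (\<Prod>r\<in>{..<n} - {k}. B r (\<theta> r))))"
        unfolding F_def sg cp by (simp add: sminus_mult sminus_mult2 mult.left_commute)
    next
      fix \<pi> assume "\<pi> \<in> ?P1a"
      then have p: "\<pi> permutes {..<n}" and pii: "\<pi> i = i" by auto
      show "\<pi> \<circ> ?\<tau> \<circ> ?\<tau> = \<pi>" by (rule inv)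
      have "(\<pi> \<circ> ?\<tau>) k = i" using pii by simp
      then show "\<pi> \<circ> ?\<tau> \<in> ?T" using permutes_compose[OF pt p] by auto
    qed
    finally show ?thesis by simp
  qed
  finally show ?thesis .
qed

section \<open>Uniqueness of signed solutions\<close>

lemma pot_lemma:
  fixes a b e mi ml :: "'a::linordered_ab_group_add"
  assumes h1: "mi + a \<le> e + b" and h2: "e + e < mi + ml"
  shows "a + a + mi < b + b + ml"
proof -
  have "(mi + a) + (mi + a) \<le> (e + b) + (e + b)" using add_mono[OF h1 h1] .
  also have "(e + b) + (e + b) = (e + e) + (b + b)" by (simp add: ac_simps)
  also have "\<dots> < (mi + ml) + (b + b)" using h2 by (rule add_strict_right_mono)
  finally have "mi + (a + a + mi) < mi + (b + b + ml)" by (simp add: ac_simps)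
  then show ?thesis by simp
qed

lemma ex_max_on:
  fixes f :: "'b \<Rightarrow> 'a::linorder"
  assumes "finite S" "S \<noteq> {}"
  shows "\<exists>i\<in>S. \<forall>j\<in>S. f j \<le> f i"
proof -
  have "Max (f ` S) \<in> f ` S" using assms by simp
  then obtain i where i: "i \<in> S" "f i = Max (f ` S)" by auto
  have "\<forall>j\<in>S. f j \<le> f i" using i assms by simp
  then show ?thesis using i by blast
qed

lemma sum_max_term:
  fixes f :: "'b \<Rightarrow> 'a::linordered_ab_group_add smax"
  assumes "finite A" "sum f A \<noteq> 0"
  shows "\<exists>x\<in>A. f x \<noteq> 0 \<and> smod (f x) = smod (sum f A)"
  using assms
proof (induction A rule: finite_induct)
  case empty then show ?case by simp
next
  case (insert a A)
  have s: "sum f (insert a A) = f a + sum f A" using insert(1,2) by simp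
  show ?case
  proof (cases "f a = 0")
    case True
    then have "sum f A \<noteq> 0" using insert(4) s by simp
    then show ?thesis using insert(3) s True by auto
  next
    case fa: False
    show ?thesis
    proof (cases "sum f A = 0")
      case True then show ?thesis using s fa by auto
    next
      case False
      then obtain x where x: "x \<in> A" "f x \<noteq> 0" "smod (f x) = smod (sum f A)" using insert(3) by blast
      have "smod (sum f (insert a A)) = max (smod (f a)) (smod (sum f A))"
        using s smod_add[OF fa False] by simp
      then show ?thesis using x fa by (cases "smod (f a) \<le> smod (sum f A)") (auto simp: max_def)
    qed
  qed
qed

lemma mult_cancel_signed:
  fixes b x y :: "'a::linordered_ab_group_add smax"
  assumes "signed b" "b \<noteq> 0" "b * x = b * y"
  shows "x = y"
  using assms by (cases b; cases x; cases y) (auto simp: signed_def zero_smax_def)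

lemma uniqueness:
  fixes B :: "nat \<Rightarrow> nat \<Rightarrow> 'a::linordered_ab_group_add smax" and x y :: "nat \<Rightarrow> 'a smax"
  assumes dm: "sdominant {..<n} B"
    and sgn: "\<forall>i<n. i \<noteq> k \<longrightarrow> signed (B i i)"
    and k: "k < n"
    and xs: "\<forall>i<n. signed (x i)" and ys: "\<forall>i<n. signed (y i)"
    and xsol: "\<forall>i<n. balanced (\<Sum>l<n. B i l * x l)"
    and yU1: "\<forall>i<n. i \<noteq> k \<longrightarrow> (\<Sum>l\<in>{..<n} - {i}. B i l * y l) = sminus (B i i * y i)"
    and xk: "x k = y k"
  shows "\<forall>i<n. x i = y i"
proof -
  define m where "m = (\<lambda>r. smod (B r r))"
  have diag: "\<And>r. r < n \<Longrightarrow> B r r \<noteq> 0" using dm by (simp add: sdominant_def)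
  have domi: "\<And>r c. r < n \<Longrightarrow> c < n \<Longrightarrow> r \<noteq> c \<Longrightarrow> B r c \<noteq> 0 \<Longrightarrow> smod (B r c) + smod (B r c) < m r + m c"
    using dm unfolding sdominant_def m_def by auto
  have row: "\<And>i z. i < n \<Longrightarrow> (\<Sum>l<n. B i l * z l) = B i i * z i + (\<Sum>l\<in>{..<n} - {i}. B i l * z l)"
    by (rule sum.remove) auto
  have ybound: "\<And>i l. i < n \<Longrightarrow> i \<noteq> k \<Longrightarrow> l < n \<Longrightarrow> l \<noteq> i \<Longrightarrow> B i l * y l \<noteq> 0 \<Longrightarrow>
      y i \<noteq> 0 \<and> smod (B i l * y l) \<le> m i + smod (y i)"
  proof -
    fix i l assume a: "i < n" "i \<noteq> k" "l < n" "l \<noteq> i" "B i l * y l \<noteq> 0"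
    have "(\<Sum>l\<in>{..<n} - {i}. B i l * y l) \<noteq> 0 \<and> smod (B i l * y l) \<le> smod (\<Sum>l\<in>{..<n} - {i}. B i l * y l)"
      by (rule sum_term_le) (use a in auto)
    then have h: "B i i * y i \<noteq> 0" "smod (B i l * y l) \<le> smod (B i i * y i)"
      using yU1 a by auto
    then have "y i \<noteq> 0" by (auto simp: mult_0_iff)
    then show "y i \<noteq> 0 \<and> smod (B i l * y l) \<le> m i + smod (y i)"
      using h smod_mult[OF diag[OF a(1)]] unfolding m_def by simp
  qed
  have stepA: "\<forall>i<n. x i \<noteq> 0 \<longrightarrow> y i \<noteq> 0 \<and> smod (x i) \<le> smod (y i)"
  proof (rule ccontr)
    assume neg: "\<not> ?thesis"
    define Bad where "Bad = {i. i < n \<and> x i \<noteq> 0 \<and> (y i = 0 \<or> smod (y i) < smod (x i))}"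
    have "Bad \<noteq> {}" using neg unfolding Bad_def by (auto simp: not_le)
    moreover have "finite Bad" unfolding Bad_def by simp
    ultimately obtain i where iB: "i \<in> Bad"
      and imax: "\<forall>j\<in>Bad. smod (x j) + smod (x j) + m j \<le> smod (x i) + smod (x i) + m i"
      using ex_max_on[of Bad "\<lambda>j. smod (x j) + smod (x j) + m j"] by blast
    have i: "i < n" "x i \<noteq> 0" "y i = 0 \<or> smod (y i) < smod (x i)" using iB unfolding Bad_def by auto
    have ik: "i \<noteq> k" using i xk by auto
    have t1: "signed (B i i * x i)" using sgn xs i ik by (simp add: signed_mult)
    have t2: "B i i * x i \<noteq> 0" using diag[OF i(1)] i(2) by (simp add: mult_0_iff)
    have "balanced (B i i * x i + (\<Sum>l\<in>{..<n} - {i}. B i l * x l))"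
      using xsol[rule_format, OF i(1)] unfolding row[OF i(1)] .
    then obtain l where l: "l \<in> {..<n} - {i}" "B i l * x l \<noteq> 0" "smod (B i i * x i) \<le> smod (B i l * x l)"
      using bal_row[OF _ t1 t2] by blast
    have ln: "l < n" "l \<noteq> i" using l(1) by auto
    have Bil: "B i l \<noteq> 0" "x l \<noteq> 0" using l(2) by (auto simp: mult_0_iff)
    have h1: "m i + smod (x i) \<le> smod (B i l) + smod (x l)"
      using l(3) smod_mult[OF diag[OF i(1)] i(2)] smod_mult[OF Bil] unfolding m_def by simp
    have h2: "smod (B i l) + smod (B i l) < m i + m l" using domi[OF i(1) ln(1) ln(2)[symmetric] Bil(1)] .
    have lbad: "l \<in> Bad"
    proof (cases "y l = 0")
      case True then show ?thesis using ln Bil unfolding Bad_def by auto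
    next
      case False
      have nz: "B i l * y l \<noteq> 0" using Bil False by (simp add: mult_0_iff)
      from ybound[OF i(1) ik ln(1) ln(2) nz] have yb: "y i \<noteq> 0" "smod (B i l) + smod (y l) \<le> m i + smod (y i)"
        using smod_mult[OF Bil(1) False] by auto
      then have ysx: "smod (y i) < smod (x i)" using i(3) by auto
      have "smod (B i l) + smod (y l) < m i + smod (x i)"
        using yb(2) add_strict_left_mono[OF ysx, of "m i"] by (rule le_less_trans)
      then have "smod (B i l) + smod (y l) < smod (B i l) + smod (x l)"
        using h1 by (rule less_le_trans)
      then have "smod (y l) < smod (x l)" by simp
      then show ?thesis using ln Bil unfolding Bad_def by auto
    qed
    have "smod (x i) + smod (x i) + m i < smod (x l) + smod (x l) + m l"
      by (rule pot_lemma[OF h1 h2])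
    then show False using imax lbad by (meson not_le)
  qed
  show ?thesis
  proof (rule ccontr)
    assume neg: "\<not> ?thesis"
    define D where "D = {i. i < n \<and> x i \<noteq> y i}"
    have "D \<noteq> {}" using neg unfolding D_def by auto
    moreover have "finite D" unfolding D_def by simp
    ultimately obtain i where iD: "i \<in> D"
      and imax: "\<forall>j\<in>D. smod (y j) + smod (y j) + m j \<le> smod (y i) + smod (y i) + m i"
      using ex_max_on[of D "\<lambda>j. smod (y j) + smod (y j) + m j"] by blast
    have i: "i < n" "x i \<noteq> y i" using iD unfolding D_def by auto
    have ik: "i \<noteq> k" using i xk by auto
    have yi: "y i \<noteq> 0" using stepA i by auto
    let ?L = "{..<n} - {i}"
    let ?s = "sminus (B i i * y i)"
    have s_sg: "signed ?s" using sgn ys i ik by (simp add: signed_mult)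
    have s_nz: "?s \<noteq> 0" using diag[OF i(1)] yi by (simp add: mult_0_iff)
    have s_mod: "smod ?s = m i + smod (y i)" using smod_mult[OF diag[OF i(1)] yi] unfolding m_def by simp
    have gs: "(\<Sum>l\<in>?L. B i l * y l) = ?s" using yU1 i ik by auto
    have tight: "\<And>l. l \<in> ?L \<Longrightarrow> B i l \<noteq> 0 \<Longrightarrow> y l \<noteq> 0 \<Longrightarrow> smod (B i l) + smod (y l) = m i + smod (y i) \<Longrightarrow> l \<notin> D"
    proof
      fix l assume l: "l \<in> ?L" "B i l \<noteq> 0" "y l \<noteq> 0" "smod (B i l) + smod (y l) = m i + smod (y i)" "l \<in> D"
      have h2: "smod (B i l) + smod (B i l) < m i + m l" using domi[OF i(1) _ _ l(2)] l(1) by auto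
      have "smod (y i) + smod (y i) + m i < smod (y l) + smod (y l) + m l"
        by (rule pot_lemma[OF _ h2]) (use l(4) in simp)
      then show False using imax l(5) by (meson not_le)
    qed
    obtain l0 where l0: "l0 \<in> ?L" "B i l0 * y l0 \<noteq> 0" "smod (B i l0 * y l0) = smod ?s"
      using sum_max_term[of ?L "\<lambda>l. B i l * y l"] gs s_nz by auto
    have nz0: "B i l0 \<noteq> 0" "y l0 \<noteq> 0" using l0(2) by (auto simp: mult_0_iff)
    have "smod (B i l0) + smod (y l0) = m i + smod (y i)" using l0(3) smod_mult[OF nz0] s_mod by simp
    then have "l0 \<notin> D" using tight[OF l0(1) nz0] by blast
    then have "x l0 = y l0" using l0(1) unfolding D_def by auto
    then have x0: "B i l0 * x l0 = B i l0 * y l0" by simp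
    have hs: "(\<Sum>l\<in>?L. B i l * x l) = ?s"
    proof (rule sum_replace[where g="\<lambda>l. B i l * y l" and h="\<lambda>l. B i l * x l", OF _ s_sg s_nz gs _ l0(1) x0 l0(2) l0(3)])
      show "finite ?L" by simp
    next
      fix l assume l: "l \<in> ?L"
      show "B i l * x l = B i l * y l \<or> B i l * x l = 0 \<or> smod (B i l * x l) < smod ?s"
      proof (cases "x l = y l \<or> B i l * x l = 0")
        case True then show ?thesis by auto
      next
        case False
        then have xy: "x l \<noteq> y l" and nz: "B i l \<noteq> 0" "x l \<noteq> 0" by (auto simp: mult_0_iff)
        have ln: "l < n" "l \<noteq> i" using l by auto
        have ya: "y l \<noteq> 0" "smod (x l) \<le> smod (y l)" using stepA ln nz by auto
        have nzy: "B i l * y l \<noteq> 0" using nz ya by (simp add: mult_0_iff)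
        have yb: "smod (B i l) + smod (y l) \<le> m i + smod (y i)"
          using ybound[OF i(1) ik ln nzy] smod_mult[OF nz(1) ya(1)] by simp
        have le1: "smod (B i l) + smod (x l) \<le> smod (B i l) + smod (y l)" using ya(2) by simp
        have ne: "smod (B i l) + smod (y l) \<noteq> m i + smod (y i)"
          using tight[OF l nz(1) ya(1)] xy ln unfolding D_def by auto
        have lt1: "smod (B i l) + smod (y l) < m i + smod (y i)" using yb ne by (simp add: order_le_less)
        have "smod (B i l) + smod (x l) < m i + smod (y i)" using le1 lt1 by (rule le_less_trans)
        then show ?thesis using smod_mult[OF nz] s_mod by simp
      qed
    qed
    have "balanced (B i i * x i + ?s)"
      using xsol[rule_format, OF i(1)] unfolding row[OF i(1)] hs .
    then have "B i i * x i = B i i * y i"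
      using signed_eq_of_bal[of "B i i * x i" "B i i * y i"] sgn xs ys i ik by (simp add: signed_mult)
    then have "x i = y i" using mult_cancel_signed[of "B i i"] sgn diag i ik by blast
    then show False using i by simp
  qed
qed

section \<open>Facts about TPD matrices\<close>

lemma sless_0_pos:
  fixes x :: "'a::linordered_ab_group_add smax"
  shows "sless 0 x \<Longrightarrow> \<exists>d. x = SPos d"
  by (cases x) (auto simp: sless_def ssub_def spositive_def zero_smax_def)

lemma tpd_diag:
  fixes A :: "nat \<Rightarrow> nat \<Rightarrow> 'a::linordered_ab_group_add smax"
  assumes "TPD n A" "r < n"
  shows "A r r = SPos (smod (A r r))"
proof -
  have "sless 0 (A r r)" using assms unfolding TPD_def by blast
  then obtain d where "A r r = SPos d" using sless_0_pos by blast
  then show ?thesis by simp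
qed

lemma sq_lemma:
  fixes a x y :: "'a::linordered_ab_group_add smax"
  assumes "signed a" "a \<noteq> 0" "x = SPos dx" "y = SPos dy" "sless (a * a) (x * y)"
  shows "smod a + smod a < smod x + smod y"
proof -
  have key: "\<And>p q::'a. spositive (SPos p + SNeg q) \<Longrightarrow> q < p"
    by (auto simp: spositive_def split: if_splits)
  obtain b where ab: "a = SPos b \<or> a = SNeg b" using assms(1,2)
    by (cases a) (auto simp: signed_def zero_smax_def)
  then have aa: "a * a = SPos (b + b)" by auto
  have "spositive (SPos (dx + dy) + SNeg (b + b))"
    using assms(5) unfolding sless_def ssub_def aa assms(3,4) by simp
  then have "b + b < dx + dy" by (rule key)
  then show ?thesis using ab assms(3,4) by auto
qed

lemma tpd_off:
  fixes A :: "nat \<Rightarrow> nat \<Rightarrow> 'a::linordered_ab_group_add smax"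
  assumes "TPD n A" "r < n" "s < n" "r \<noteq> s" "A r s \<noteq> 0"
  shows "smod (A r s) + smod (A r s) < smod (A r r) + smod (A s s)"
proof -
  have "signed (A r s)" "sless (A r s * A r s) (A r r * A s s)" using assms unfolding TPD_def by auto
  then show ?thesis
    using sq_lemma[of "A r s" "A r r" "smod (A r r)" "A s s" "smod (A s s)"] tpd_diag[OF assms(1,2)] tpd_diag[OF assms(1,3)] assms(5)
    by simp
qed

lemma ssub_SPos_nz:
  fixes x :: "'a::linordered_ab_group_add smax"
  shows "ssub x (SPos d) \<noteq> 0 \<and> d \<le> smod (ssub x (SPos d))"
  by (cases x) (auto simp: ssub_def zero_smax_def)

lemma tpd_dominant:
  fixes A :: "nat \<Rightarrow> nat \<Rightarrow> 'a::linordered_ab_group_add smax"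
  assumes tpd: "TPD n A"
  shows "sdominant {..<n} (\<lambda>r s. ssub (if r = s then x else 0) (A r s))"
  unfolding sdominant_def
proof (intro conjI ballI impI)
  fix r assume r: "r \<in> {..<n}"
  have "A r r = SPos (smod (A r r))" using tpd_diag[OF tpd] r by simp
  then show "ssub (if r = r then x else 0) (A r r) \<noteq> 0"
    using ssub_SPos_nz[of x "smod (A r r)"] by simp
next
  fix r c assume rc: "r \<in> {..<n}" "c \<in> {..<n}" "r \<noteq> c"
  let ?M = "\<lambda>r s. ssub (if r = s then x else 0) (A r s)"
  have off: "?M r c = sminus (A r c)" using rc(3) by (simp add: ssub_def)
  show "?M r c = 0 \<or> smod (?M r c) + smod (?M r c) < smod (?M r r) + smod (?M c c)"
  proof (cases "A r c = 0")
    case True then show ?thesis using off by simp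
  next
    case False
    have h: "smod (A r c) + smod (A r c) < smod (A r r) + smod (A c c)"
      using tpd_off[OF tpd _ _ rc(3) False] rc by auto
    have d1: "smod (A r r) \<le> smod (?M r r)" using ssub_SPos_nz[of x "smod (A r r)"] tpd_diag[OF tpd, of r] rc by simp
    have d2: "smod (A c c) \<le> smod (?M c c)" using ssub_SPos_nz[of x "smod (A c c)"] tpd_diag[OF tpd, of c] rc by simp
    have "smod (?M r c) + smod (?M r c) < smod (?M r r) + smod (?M c c)"
      using h add_mono[OF d1 d2] off by simp
    then show ?thesis by simp
  qed
qed

lemma skip_lt: "r < m \<Longrightarrow> skip j r < Suc m"
  by (simp add: skip_def)

lemma skip_inj: "skip j r = skip j c \<Longrightarrow> r = c"
  by (auto simp: skip_def split: if_splits)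

lemma skip_hit:
  assumes "i < Suc m" "j < Suc m" "i \<noteq> j"
  shows "\<exists>r<m. skip j r = i"
proof (cases "i < j")
  case True then show ?thesis using assms by (intro exI[of _ i]) (auto simp: skip_def)
next
  case False then show ?thesis using assms by (intro exI[of _ "i - 1"]) (auto simp: skip_def)
qed

lemma sdominant_minor:
  assumes dm: "sdominant {..<Suc m} B"
  shows "sdominant {..<m} (sminor B j j)"
  unfolding sdominant_def sminor_def
proof (intro conjI ballI impI)
  fix r assume "r \<in> {..<m}"
  then have "skip j r \<in> {..<Suc m}" using skip_lt by simp
  then show "B (skip j r) (skip j r) \<noteq> 0" using dm unfolding sdominant_def by blast
next
  fix r c assume rc: "r \<in> {..<m}" "c \<in> {..<m}" "r \<noteq> c"
  then have "skip j r \<in> {..<Suc m}" "skip j c \<in> {..<Suc m}" "skip j r \<noteq> skip j c"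
    using skip_lt skip_inj by auto
  then show "B (skip j r) (skip j c) = 0 \<or> smod (B (skip j r) (skip j c)) + smod (B (skip j r) (skip j c))
      < smod (B (skip j r) (skip j r)) + smod (B (skip j c) (skip j c))"
    using dm unfolding sdominant_def by blast
qed

lemma prod_bal_not_signed:
  fixes f :: "nat \<Rightarrow> 'a::linordered_ab_group_add smax"
  assumes "finite S" "q \<in> S" "f q = SBal a" "\<forall>r\<in>S. f r \<noteq> 0"
  shows "\<not> signed (prod f S)"
proof -
  have "prod f S = f q * prod f (S - {q})" using assms by (simp add: prod.remove)
  moreover have "prod f (S - {q}) \<noteq> 0" using prod_nonzero[of "S - {q}" f] assms by auto
  ultimately show ?thesis using assms(3)
    by (cases "prod f (S - {q})") (auto simp: signed_def zero_smax_def)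
qed

fun sinv :: "'a::linordered_ab_group_add smax \<Rightarrow> 'a smax" where
  "sinv (SPos a) = SPos (- a)" | "sinv (SNeg a) = SNeg (- a)" | "sinv x = x"

lemma sinv_props:
  fixes u :: "'a::linordered_ab_group_add smax"
  shows "signed u \<Longrightarrow> u \<noteq> 0 \<Longrightarrow> sinv u * u = 1 \<and> signed (sinv u)"
  by (cases u) (auto simp: signed_def zero_smax_def one_smax_def)

lemma eig_conv:
  fixes A :: "nat \<Rightarrow> nat \<Rightarrow> 'a::linordered_ab_group_add smax"
  assumes "sbal (smat_vec n A v i) (\<gamma> * v i)" "i < n"
  shows "balanced (\<Sum>l<n. ssub (if i = l then \<gamma> else 0) (A i l) * v l)"
proof -
  have "(\<Sum>l<n. ssub (if i = l then \<gamma> else 0) (A i l) * v l)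
      = (\<Sum>l<n. (if l = i then \<gamma> * v l else 0)) + (\<Sum>l<n. sminus (A i l * v l))"
  proof -
    have e1: "\<And>l. ssub (if i = l then \<gamma> else 0) (A i l) * v l = (if l = i then \<gamma> * v l else 0) + sminus (A i l * v l)"
      by (auto simp: ssub_def distrib_right sminus_mult)
    show ?thesis unfolding e1 by (rule sum.distrib)
  qed
  also have "(\<Sum>l<n. (if l = i then \<gamma> * v l else 0)) = \<gamma> * v i" using assms(2) by simp
  also have "(\<Sum>l<n. sminus (A i l * v l)) = sminus (smat_vec n A v i)"
    unfolding smat_vec_def by (simp add: sminus_sum)
  finally have "(\<Sum>l<n. ssub (if i = l then \<gamma> else 0) (A i l) * v l) = sminus (ssub (smat_vec n A v i) (\<gamma> * v i))"
    unfolding ssub_def by (simp add: sminus_add add.commute)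
  then show ?thesis using assms(1) unfolding sbal_def by simp
qed

theorem corollary5p4:
  fixes A :: "nat \<Rightarrow> nat \<Rightarrow> 'a::linordered_ab_group_add smax"
    and n k j :: nat
  assumes divisible: "\<forall>(x::'a) (m::nat). 0 < m \<longrightarrow> (\<exists>y. (\<Sum>i<m. y) = x)"
    and tpd: "TPD n A"
    and ordered: "\<forall>i j. i \<le> j \<and> j < n \<longrightarrow> sle (A j j) (A i i)"
    and k: "k < n"
    and j: "j < n"
    and col_signed: "\<forall>i<n. signed (sadj n (\<lambda>r s. ssub (if r = s then A k k else 0) (A r s)) i j)"
    and col_nonzero: "\<exists>i<n. sadj n (\<lambda>r s. ssub (if r = s then A k k else 0) (A r s)) i j \<noteq> 0"
  shows "j = k \<and>
         (\<forall>v. seigvec n A (A k k) v \<longrightarrow>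
              (\<exists>c. \<forall>i<n. v i = c * sadj n (\<lambda>r s. ssub (if r = s then A k k else 0) (A r s)) i j)) \<and>
         simple_alg_eigenvalue n A (A k k)"
proof -
  define B where "B = (\<lambda>r s. ssub (if r = s then A k k else 0) (A r s))"
  have cs: "\<forall>i<n. signed (sadj n B i j)" using col_signed unfolding B_def .
  obtain m where nm: "n = Suc m" using k by (cases n) auto
  define g where "g = smod (A k k)"
  have Akk: "A k k = SPos g" using tpd_diag[OF tpd k] unfolding g_def .
  have dm: "sdominant {..<n} B" unfolding B_def by (rule tpd_dominant[OF tpd])
  have Bdiag: "\<And>r. r < n \<Longrightarrow> B r r = SPos g + SNeg (smod (A r r))"
  proof -
    fix r assume "r < n"
    then have "A r r = SPos (smod (A r r))" by (rule tpd_diag[OF tpd])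
    then show "B r r = SPos g + SNeg (smod (A r r))" unfolding B_def ssub_def Akk
      by (metis sminus.simps(2))
  qed
  have Bkk: "B k k = SBal g" using Bdiag[OF k] Akk by simp
  have diagnz: "\<And>r. r < n \<Longrightarrow> B r r \<noteq> 0" using dm by (simp add: sdominant_def)
  have adj_diag: "\<And>jj. jj < n \<Longrightarrow> sadj n B jj jj = (\<Prod>r<m. B (skip jj r) (skip jj r))"
  proof -
    fix jj assume jj: "jj < n"
    have "(sminus 1) ^ (jj + jj) = (1::'a smax)" by (rule sminus_one_pow_even) simp
    moreover have "sdet m (sminor B jj jj) = (\<Prod>r<m. sminor B jj jj r r)"
      by (rule sdet_dom[OF sdominant_minor]) (use dm nm in simp)
    ultimately show "sadj n B jj jj = (\<Prod>r<m. B (skip jj r) (skip jj r))"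
      unfolding sadj_def sminor_def using nm by simp
  qed
  have adj_nz: "\<And>jj. jj < n \<Longrightarrow> \<forall>r\<in>{..<m}. B (skip jj r) (skip jj r) \<noteq> 0"
    using diagnz skip_lt nm by simp
  have jk: "j = k"
  proof (rule ccontr)
    assume jk: "j \<noteq> k"
    obtain r0 where r0: "r0 < m" "skip j r0 = k" using skip_hit[of k m j] k j jk nm by auto
    have "\<not> signed (\<Prod>r<m. B (skip j r) (skip j r))"
      by (rule prod_bal_not_signed[where q = r0 and a = g]) (use r0 Bkk adj_nz[OF j] in auto)
    moreover have "signed (sadj n B j j)" using cs j by blast
    ultimately show False unfolding adj_diag[OF j] by contradiction
  qed
  have noties: "\<And>i. i < n \<Longrightarrow> i \<noteq> k \<Longrightarrow> A i i \<noteq> A k k"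
  proof
    fix i assume i: "i < n" "i \<noteq> k" and eq: "A i i = A k k"
    obtain r0 where r0: "r0 < m" "skip k r0 = i" using skip_hit[of i m k] k i nm by auto
    have "B i i = SBal g" using Bdiag[OF i(1)] eq Akk by simp
    then have "\<not> signed (\<Prod>r<m. B (skip k r) (skip k r))"
      by (intro prod_bal_not_signed[where q = r0 and a = g]) (use r0 adj_nz[OF k] in auto)
    moreover have "signed (sadj n B k k)" using cs k jk by blast
    ultimately show False unfolding adj_diag[OF k] by contradiction
  qed
  have sgnB: "\<forall>i<n. i \<noteq> k \<longrightarrow> signed (B i i)"
  proof (intro allI impI)
    fix i assume i: "i < n" "i \<noteq> k"
    have "smod (A i i) \<noteq> g" using noties[OF i] tpd_diag[OF tpd i(1)] Akk by metis
    then show "signed (B i i)" using Bdiag[OF i(1)] by (auto simp: signed_def)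
  qed
  define u where "u = (\<lambda>l. sadj n B l k)"
  have u_ucol: "\<And>l. l < n \<Longrightarrow> u l = ucol n B k l"
  proof -
    fix l assume l: "l < n"
    have "u l = (sminus 1) ^ (l + k) * sdet m (sminor B k l)" unfolding u_def sadj_def using nm by simp
    also have "\<dots> = ucol n B k l" unfolding ucol_def using cofactor[of k m l B] k l nm by simp
    finally show "u l = ucol n B k l" .
  qed
  have us: "\<forall>i<n. signed (u i)" using cs jk unfolding u_def by simp
  have uk: "u k \<noteq> 0"
    using adj_diag[OF k] prod_nonzero[of "{..<m}" "\<lambda>r. B (skip k r) (skip k r)"] adj_nz[OF k] unfolding u_def by simp
  have uU1: "\<forall>i<n. i \<noteq> k \<longrightarrow> (\<Sum>l\<in>{..<n} - {i}. B i l * u l) = sminus (B i i * u i)"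
  proof (intro allI impI)
    fix i assume i: "i < n" "i \<noteq> k"
    have "(\<Sum>l\<in>{..<n} - {i}. B i l * u l) = (\<Sum>l\<in>{..<n} - {i}. B i l * ucol n B k l)"
      by (rule sum.cong) (auto simp: u_ucol)
    also have "\<dots> = sminus (B i i * ucol n B k i)" by (rule U1[OF dm i(1) k i(2)])
    finally show "(\<Sum>l\<in>{..<n} - {i}. B i l * u l) = sminus (B i i * u i)" using u_ucol[OF i(1)] by simp
  qed
  have part2: "\<forall>v. seigvec n A (A k k) v \<longrightarrow> (\<exists>c. \<forall>i<n. v i = c * u i)"
  proof (intro allI impI)
    fix v assume ev: "seigvec n A (A k k) v"
    have vs: "\<forall>i<n. signed (v i)" using ev unfolding seigvec_def by blast
    have vsol: "\<forall>i<n. balanced (\<Sum>l<n. B i l * v l)"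
      using ev eig_conv unfolding seigvec_def B_def by blast
    define c where "c = v k * sinv (u k)"
    have si: "sinv (u k) * u k = 1" "signed (sinv (u k))" using sinv_props[OF _ uk] us k by auto
    define y where "y = (\<lambda>l. c * u l)"
    have ys: "\<forall>i<n. signed (y i)" unfolding y_def c_def using us vs si k by (simp add: signed_mult)
    have yk: "v k = y k" unfolding y_def c_def using si by (simp add: mult.assoc)
    have yU1: "\<forall>i<n. i \<noteq> k \<longrightarrow> (\<Sum>l\<in>{..<n} - {i}. B i l * y l) = sminus (B i i * y i)"
    proof (intro allI impI)
      fix i assume i: "i < n" "i \<noteq> k"
      have "(\<Sum>l\<in>{..<n} - {i}. B i l * y l) = c * (\<Sum>l\<in>{..<n} - {i}. B i l * u l)"
        unfolding y_def by (simp add: sum_distrib_left mult.left_commute)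
      also have "\<dots> = c * sminus (B i i * u i)" using uU1 i by simp
      also have "\<dots> = sminus (B i i * y i)" unfolding y_def
        by (simp add: sminus_mult2[symmetric] mult.left_commute)
      finally show "(\<Sum>l\<in>{..<n} - {i}. B i l * y l) = sminus (B i i * y i)" .
    qed
    have "\<forall>i<n. v i = y i" by (rule uniqueness[OF dm sgnB k vs ys vsol yU1 yk])
    then show "\<exists>c. \<forall>i<n. v i = c * u i" unfolding y_def by blast
  qed
  have part3: "simple_alg_eigenvalue n A (A k k)"
    unfolding simple_alg_eigenvalue_def
  proof (intro exI[of _ "\<lambda>i. A i i"] conjI)
    show "\<forall>i<n. signed (A i i)" using tpd unfolding TPD_def by blast
  next
    show "\<forall>x. signed x \<longrightarrow> scharpoly n A x = (\<Prod>i<n. ssub x (A i i))"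
    proof (intro allI impI)
      fix x :: "'a smax"
      show "scharpoly n A x = (\<Prod>i<n. ssub x (A i i))"
        unfolding scharpoly_def by (subst sdet_dom[OF tpd_dominant[OF tpd]]) simp
    qed
  next
    have "{i. i < n \<and> A i i = A k k} = {k}" using noties k by auto
    then show "card {i. i < n \<and> A i i = A k k} = 1" by simp
  qed
  show ?thesis using jk part2 part3 unfolding u_def B_def by simp
qed

end
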